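(* Let $\Omega$ be a finite-dimensional real Euclidean space and $f_1,\dots,f_N\colon\Omega\to\mathbb{R}$ convex functions, each $\mu$-strongly convex and $L$-smooth for some $\mu,L>0$; let $E=\frac1N\sum_{j=1}^N f_j$ and let $\theta^*$ be its minimizer. Run DualFL (described in the context) with hyperparameters $\rho\in[0,\nu/L]$ and $\nu\in(0,\mu]$, and suppose that for some $\gamma>0$ the local iterates satisfy, for all $1\le j\le N$ and $n\ge0$, \[ \Gamma^{n,j}(\theta_j^{(n+1)}) \le \frac1N\left(\frac{1-\sqrt{\rho}}{1+\gamma}\right)^n . \] Then $\{\theta^{(n)}\}$ converges to $\theta^*$ and, for $n\ge 0$, \[ E(\theta^{(n)})-E(\theta^* ) \lesssim \|\theta^{(n)}-\theta^*\|^2 \lesssim (1-\sqrt{\rho})^n . \] In particular, with $\rho=\kappa^{-1}$ and $\nu=\mu$, where $\kappa=L/\mu$, one has $E(\theta^{(n)})-E(\theta^* )\lesssim\|\theta^{(n)}-\theta^*\|^2\lesssim(1-1/\sqrt{\kappa})^n$.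
   Context: $h$ is $\mu$-strongly convex if $h-\frac{\mu}{2}\|\cdot\|^2$ is convex; $h$ is $L$-smooth if it is differentiable with $L$-Lipschitz gradient; $h^*(p)=\sup_x\{\langle p,x\rangle-h(x)\}$ is the Legendre--Fenchel conjugate. $A\lesssim B$ means $A\le CB$ for a constant $C>0$ independent of $n$. DualFL with hyperparameters $\rho\ge0$, $\nu>0$: set $\theta^{(0)}=\theta_j^{(0)}=0$, $\zeta_j^{(0)}=\zeta_j^{(-1)}=0$, $t_0=1$. For $n=0,1,\dots$: each client $j$ computes an approximate minimizer $\theta_j^{(n+1)}$ of $E^{n,j}(\theta)=f_j(\theta)-\nu\langle\zeta_j^{(n)},\theta\rangle$; $\theta^{(n+1)}=\frac1N\sum_j\theta_j^{(n+1)}$; $t_{n+1}=\frac{1-\rho t_n^2+\sqrt{(1-\rho t_n^2)^2+4t_n^2}}{2}$, $\beta_n=\frac{t_n-1}{t_{n+1}}\cdot\frac{1-t_{n+1}\rho}{1-\rho}$; $\zeta_j^{(n+1)}=(1+\beta_n)(\zeta_j^{(n)}+\theta^{(n+1)}-\theta_j^{(n+1)})-\beta_n(\zeta_j^{(n-1)}+\theta^{(n)}-\theta_j^{(n)})$. Primal-dual gap: $g_j=f_j-\frac\nu2\|\cdot\|^2$, $E^{n,j}_{\mathrm d}(\xi)=g_j^*(\xi)+\frac1{2\nu}\|\xi-\nu\zeta_j^{(n)}\|^2$, $\Gamma^{n,j}(\theta)=E^{n,j}(\theta)+E^{n,j}_{\mathrm d}(\nu(\zeta_j^{(n)}-\theta))$.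 *)

theory Defs
  imports "HOL-Analysis.Analysis"
begin

definition strongly_convex :: "real \<Rightarrow> ('a::real_inner \<Rightarrow> real) \<Rightarrow> bool" where
  "strongly_convex \<mu> h \<longleftrightarrow> convex_on UNIV (\<lambda>x. h x - \<mu> / 2 * (norm x)\<^sup>2)"

definition L_smooth :: "real \<Rightarrow> ('a::real_inner \<Rightarrow> real) \<Rightarrow> bool" where
  "L_smooth L h \<longleftrightarrow> (\<exists>G. (\<forall>x. (h has_derivative (\<lambda>v. G x \<bullet> v)) (at x))
                          \<and> (\<forall>x y. norm (G x - G y) \<le> L * norm (x - y)))"

definition fconj :: "('a::real_inner \<Rightarrow> real) \<Rightarrow> 'a \<Rightarrow> ereal" where
  "fconj h p = (SUP x. ereal (p \<bullet> x - h x))"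

fun dualfl_t :: "real \<Rightarrow> nat \<Rightarrow> real" where
  "dualfl_t \<rho> 0 = 1"
| "dualfl_t \<rho> (Suc n) =
     (let t = dualfl_t \<rho> n in
       (1 - \<rho> * t\<^sup>2 + sqrt ((1 - \<rho> * t\<^sup>2)\<^sup>2 + 4 * t\<^sup>2)) / 2)"

definition dualfl_beta :: "real \<Rightarrow> nat \<Rightarrow> real" where
  "dualfl_beta \<rho> n = (dualfl_t \<rho> n - 1) / dualfl_t \<rho> (Suc n)
                     * ((1 - dualfl_t \<rho> (Suc n) * \<rho>) / (1 - \<rho>))"

text \<open>Dual variable zeta_j^(n) of client j, given the global iterates th n = theta^(n)
  and the local iterates thj n = theta_j^(n); zeta^(0) = zeta^(-1) = 0.\<close>
fun dualfl_zeta :: "real \<Rightarrow> (nat \<Rightarrow> 'a::real_vector) \<Rightarrow> (nat \<Rightarrow> 'a) \<Rightarrow> nat \<Rightarrow> 'a" where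
  "dualfl_zeta \<rho> th thj 0 = 0"
| "dualfl_zeta \<rho> th thj (Suc 0) =
     (1 + dualfl_beta \<rho> 0) *\<^sub>R (0 + th 1 - thj 1) - dualfl_beta \<rho> 0 *\<^sub>R (0 + th 0 - thj 0)"
| "dualfl_zeta \<rho> th thj (Suc (Suc n)) =
     (1 + dualfl_beta \<rho> (Suc n)) *\<^sub>R
        (dualfl_zeta \<rho> th thj (Suc n) + th (Suc (Suc n)) - thj (Suc (Suc n)))
     - dualfl_beta \<rho> (Suc n) *\<^sub>R (dualfl_zeta \<rho> th thj n + th (Suc n) - thj (Suc n))"

text \<open>Local primal-dual gap Gamma^{n,j}(theta) for the local function h = f_j and
  current dual variable z = zeta_j^(n).\<close>
definition dualfl_gap :: "real \<Rightarrow> ('a::real_inner \<Rightarrow> real) \<Rightarrow> 'a \<Rightarrow> 'a \<Rightarrow> ereal" where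
  "dualfl_gap \<nu> h z \<theta> =
     ereal (h \<theta> - \<nu> * (z \<bullet> \<theta>))
     + (fconj (\<lambda>x. h x - \<nu> / 2 * (norm x)\<^sup>2) (\<nu> *\<^sub>R (z - \<theta>))
        + ereal (1 / (2 * \<nu>) * (norm (\<nu> *\<^sub>R (z - \<theta>) - \<nu> *\<^sub>R z))\<^sup>2))"

end

theory Submission
  imports Defs
begin


lemma descent:
  fixes h :: "'a::real_inner \<Rightarrow> real"
  assumes hd: "\<And>x. (h has_derivative (\<lambda>v. G x \<bullet> v)) (at x)"
    and lip: "\<And>x y. norm (G x - G y) \<le> L * norm (x - y)"
  shows "h y \<le> h x + G x \<bullet> (y - x) + L / 2 * (norm (y - x))\<^sup>2"
proof -
  define v where "v = y - x"
  define K where "K = L / 2 * (norm v)\<^sup>2"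
  define \<phi> where "\<phi> s = h (x + s *\<^sub>R v) - s * (G x \<bullet> v) - K * s\<^sup>2" for s
  have "\<phi> 1 \<le> \<phi> 0"
  proof (rule DERIV_nonpos_imp_nonincreasing[of 0 1])
    fix s :: real assume s: "0 \<le> s" "s \<le> 1"
    have d1: "((\<lambda>s. h (x + s *\<^sub>R v)) has_derivative (\<lambda>r. G (x + s *\<^sub>R v) \<bullet> (r *\<^sub>R v))) (at s)"
      by (rule has_derivative_compose[OF _ hd]) (auto intro!: derivative_eq_intros)
    have d1': "DERIV (\<lambda>s. h (x + s *\<^sub>R v)) s :> G (x + s *\<^sub>R v) \<bullet> v"
      unfolding has_field_derivative_def
      by (rule has_derivative_eq_rhs[OF d1]) (auto simp: mult.commute)
    have d2: "DERIV (\<lambda>s. s * (G x \<bullet> v)) s :> G x \<bullet> v"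
      by (auto intro!: derivative_eq_intros)
    have d3: "DERIV (\<lambda>s. K * s\<^sup>2) s :> K * (2 * s)"
      by (auto intro!: derivative_eq_intros)
    have "DERIV \<phi> s :> G (x + s *\<^sub>R v) \<bullet> v - G x \<bullet> v - K * (2 * s)"
      unfolding \<phi>_def by (intro DERIV_diff d1' d2 d3)
    then have "DERIV \<phi> s :> G (x + s *\<^sub>R v) \<bullet> v - G x \<bullet> v - L * s * (norm v)\<^sup>2"
      by (simp add: K_def algebra_simps)
    moreover have "G (x + s *\<^sub>R v) \<bullet> v - G x \<bullet> v - L * s * (norm v)\<^sup>2 \<le> 0"
    proof -
      have "G (x + s *\<^sub>R v) \<bullet> v - G x \<bullet> v = (G (x + s *\<^sub>R v) - G x) \<bullet> v" by (simp add: inner_diff_left)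
      also have "\<dots> \<le> norm (G (x + s *\<^sub>R v) - G x) * norm v" by (rule norm_cauchy_schwarz)
      also have "\<dots> \<le> L * norm (s *\<^sub>R v) * norm v"
        using lip[of "x + s *\<^sub>R v" x] by (simp add: mult_right_mono)
      also have "\<dots> = L * s * (norm v)\<^sup>2" using s by (simp add: power2_eq_square)
      finally show ?thesis by simp
    qed
    ultimately show "\<exists>y. DERIV \<phi> s :> y \<and> y \<le> 0" by blast
  qed simp
  then show ?thesis unfolding \<phi>_def v_def K_def by (simp add: algebra_simps)
qed

lemma tangent:
  fixes h :: "'a::real_inner \<Rightarrow> real"
  assumes cv: "convex_on UNIV h" and hd: "(h has_derivative (\<lambda>v. D \<bullet> v)) (at x)"
  shows "h y \<ge> h x + D \<bullet> (y - x)"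
proof -
  define v where "v = y - x"
  define \<phi> where "\<phi> s = h (x + s *\<^sub>R v)" for s
  have cphi: "convex_on UNIV \<phi>"
  proof (rule convex_onI)
    fix t a b :: real assume t: "0 < t" "t < 1"
    have "x + ((1 - t) *\<^sub>R a + t *\<^sub>R b) *\<^sub>R v = (1 - t) *\<^sub>R (x + a *\<^sub>R v) + t *\<^sub>R (x + b *\<^sub>R v)"
      by (simp add: algebra_simps)
    then show "\<phi> ((1 - t) *\<^sub>R a + t *\<^sub>R b) \<le> (1 - t) * \<phi> a + t * \<phi> b"
      unfolding \<phi>_def using convex_onD[OF cv, of t "x + a *\<^sub>R v" "x + b *\<^sub>R v"] t by simp
  qed simp
  have d1: "((\<lambda>s. h (x + s *\<^sub>R v)) has_derivative (\<lambda>r. D \<bullet> (r *\<^sub>R v))) (at 0)"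
    by (rule has_derivative_compose[of "\<lambda>s. x + s *\<^sub>R v" _ _ _ h]) (auto intro!: derivative_eq_intros hd)
  have "(\<phi> has_field_derivative D \<bullet> v) (at 0 within UNIV)"
    unfolding has_field_derivative_def \<phi>_def
    by (rule has_derivative_eq_rhs[OF d1]) (auto simp: mult.commute)
  from convex_on_imp_above_tangent[OF cphi _ _ _ this, of 1] have "\<phi> 1 - \<phi> 0 \<ge> D \<bullet> v" by simp
  then show ?thesis unfolding \<phi>_def v_def by simp
qed

lemma sq_comb:
  fixes a b :: "'a::real_inner"
  shows "(1 - t) * (norm a)\<^sup>2 + t * (norm b)\<^sup>2 = (norm ((1 - t) *\<^sub>R a + t *\<^sub>R b))\<^sup>2 + t * (1 - t) * (norm (a - b))\<^sup>2"
  by (simp add: power2_norm_eq_inner inner_add_left inner_add_right inner_diff_left inner_diff_right algebra_simps inner_commute)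

lemma sq_sum_le:
  fixes a :: "nat \<Rightarrow> 'a::real_inner"
  shows "(norm (\<Sum>j<N. a j))\<^sup>2 \<le> real N * (\<Sum>j<N. (norm (a j))\<^sup>2)"
proof -
  have "(norm (\<Sum>j<N. a j))\<^sup>2 \<le> (\<Sum>j<N. norm (a j))\<^sup>2"
    by (intro power_mono norm_sum) auto
  also have "\<dots> \<le> (\<Sum>j<N. (norm (a j))\<^sup>2) * card {..<N}"
    by (rule sum_squared_le_sum_of_squares)
  finally show ?thesis by (simp add: mult.commute)
qed

lemma t_rec:
  "(dualfl_t \<rho> (Suc n))\<^sup>2 - dualfl_t \<rho> (Suc n) = (dualfl_t \<rho> n)\<^sup>2 * (1 - \<rho> * dualfl_t \<rho> (Suc n))"
proof -
  define t where "t = dualfl_t \<rho> n"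
  define b where "b = 1 - \<rho> * t\<^sup>2"
  define r where "r = sqrt (b\<^sup>2 + 4 * t\<^sup>2)"
  have r2: "r\<^sup>2 = b\<^sup>2 + 4 * t\<^sup>2" unfolding r_def by simp
  have eq: "dualfl_t \<rho> (Suc n) = (b + r) / 2" by (simp add: t_def b_def r_def Let_def)
  have key: "((b + r) / 2)\<^sup>2 - (b + r) / 2 = t\<^sup>2 * (1 - \<rho> * ((b + r) / 2))"
  proof -
    have "4 * (((b + r) / 2)\<^sup>2 - (b + r) / 2) = 4 * (t\<^sup>2 * (1 - \<rho> * ((b + r) / 2)))"
      using r2 unfolding b_def power2_eq_square by (simp add: field_simps)
    then show ?thesis by (metis mult_left_cancel zero_neq_numeral)
  qed
  show ?thesis by (subst eq)+ (use key in \<open>simp add: t_def\<close>)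
qed

lemma t_ge1:
  assumes "0 \<le> \<rho>" "\<rho> \<le> 1"
  shows "dualfl_t \<rho> n \<ge> 1"
proof (induction n)
  case (Suc n)
  define t where "t = dualfl_t \<rho> n"
  define b where "b = 1 - \<rho> * t\<^sup>2"
  have "2 - b \<le> sqrt (b\<^sup>2 + 4 * t\<^sup>2)"
  proof (cases "2 - b \<le> 0")
    case False
    have h: "\<rho> * t\<^sup>2 \<le> t\<^sup>2" using assms by (simp add: mult_left_le_one_le)
    have "(2 - b)\<^sup>2 = b\<^sup>2 + 4 - 4 * b" by (simp add: power2_eq_square algebra_simps)
    moreover have "1 - b = \<rho> * t\<^sup>2" by (simp add: b_def)
    ultimately have "(2 - b)\<^sup>2 \<le> b\<^sup>2 + 4 * t\<^sup>2" using h by linarith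
    then show ?thesis using False by (intro real_le_rsqrt) auto
    next
    case True
    have "0 \<le> sqrt (b\<^sup>2 + 4 * t\<^sup>2)" by simp
    then show ?thesis using True by linarith
  qed
  then show ?case by (simp add: t_def b_def Let_def)
qed simp

lemma t_bound:
  assumes "0 \<le> \<rho>" "\<rho> \<le> 1"
  shows "\<rho> * (dualfl_t \<rho> n)\<^sup>2 \<le> 1"
proof (induction n)
  case 0 then show ?case using assms by simp
next
  case (Suc n)
  define t where "t = dualfl_t \<rho> n"
  define t' where "t' = dualfl_t \<rho> (Suc n)"
  have r: "t'\<^sup>2 - t' = t\<^sup>2 * (1 - \<rho> * t')" using t_rec unfolding t_def t'_def by blast
  have t1: "t' \<ge> 1" using t_ge1[OF assms] unfolding t'_def by blast
  have ih: "\<rho> * t\<^sup>2 \<le> 1" using Suc unfolding t_def .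
  have "\<rho> * t'\<^sup>2 \<le> 1"
  proof (cases "1 - \<rho> * t' \<ge> 0")
    case True
    have "\<rho> * (t'\<^sup>2 - t') = (\<rho> * t\<^sup>2) * (1 - \<rho> * t')" using r by simp
    also have "\<dots> \<le> 1 * (1 - \<rho> * t')" using ih True by (rule mult_right_mono)
    finally have "\<rho> * (t'\<^sup>2 - t') \<le> 1 - \<rho> * t'" by simp
    then show ?thesis by (simp add: algebra_simps)
  next
    case False
    have "t\<^sup>2 * (1 - \<rho> * t') \<le> 0" using False by (intro mult_nonneg_nonpos) auto
    moreover have "\<rho> * t' \<le> 1 * t'" using assms t1 by (intro mult_right_mono) auto
    then have "t' > 1" using False by simp
    then have "t' * (t' - 1) > 0" by simp
    ultimately show ?thesis using r by (simp add: power2_eq_square algebra_simps)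
  qed
  then show ?case by (simp only: t'_def)
qed

lemma t_step:
  assumes "0 \<le> \<rho>" "\<rho> \<le> 1"
  shows "dualfl_t \<rho> (Suc n) \<le> dualfl_t \<rho> n + 1"
proof -
  define t where "t = dualfl_t \<rho> n"
  define t' where "t' = dualfl_t \<rho> (Suc n)"
  have r: "t'\<^sup>2 - t' = t\<^sup>2 * (1 - \<rho> * t')" using t_rec unfolding t_def t'_def by blast
  have t1: "t' \<ge> 1" "t \<ge> 1" using t_ge1[OF assms] unfolding t'_def t_def by blast+
  have "t\<^sup>2 * (1 - \<rho> * t') \<le> t\<^sup>2" using assms t1 by (simp add: mult_left_le)
  then have "t'\<^sup>2 - t' \<le> t\<^sup>2" using r by simp
  then have "(t' - 1/2)\<^sup>2 \<le> (t + 1/2)\<^sup>2" using t1 by (simp add: power2_eq_square algebra_simps)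
  then have "t' - 1/2 \<le> t + 1/2" using t1 by (simp add: power2_le_iff_abs_le)
  then show ?thesis unfolding t_def t'_def by simp
qed



lemma rec_bound:
  fixes W T \<delta> \<eta> a e :: "nat \<Rightarrow> real"
  assumes W: "\<And>k. W (Suc k) \<le> (1 + \<delta> k) * a k * W k + e k"
    and a0: "\<And>k. 0 \<le> a k" and d0: "\<And>k. 0 \<le> \<delta> k"
    and aT: "\<And>k. a k * T k \<le> T (Suc k)"
    and eT: "\<And>k. e k \<le> \<eta> k * T (Suc k)" and e0: "\<And>k. 0 \<le> \<eta> k"
    and T0: "\<And>k. T k > 0"
    and D: "\<And>k. (\<Sum>i<k. \<delta> i) \<le> D" and H: "\<And>k. (\<Sum>i<k. \<eta> i) \<le> H"
    and W0: "W 0 \<le> C0 * T 0" and C0: "C0 \<ge> 0"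
  shows "W k \<le> (C0 + H) * exp D * T k"
proof -
  define P where "P k = (\<Prod>i<k. 1 + \<delta> i)" for k
  define C where "C k = C0 + (\<Sum>i<k. \<eta> i)" for k
  have P1: "P k \<ge> 1" for k unfolding P_def using d0 by (intro prod_ge_1) (auto simp: add_nonneg_nonneg)
  have C0': "C k \<ge> 0" for k unfolding C_def using C0 e0 by (intro add_nonneg_nonneg sum_nonneg) auto
  have main: "W k \<le> C k * P k * T k" for k
  proof (induction k)
    case 0 then show ?case using W0 by (simp add: C_def P_def)
  next
    case (Suc k)
    have "W (Suc k) \<le> (1 + \<delta> k) * a k * W k + e k" by (rule W)
    also have "\<dots> \<le> (1 + \<delta> k) * a k * (C k * P k * T k) + \<eta> k * T (Suc k)"
      using Suc a0 d0 eT by (intro add_mono mult_left_mono) (auto intro: mult_nonneg_nonneg add_nonneg_nonneg)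
    also have "(1 + \<delta> k) * a k * (C k * P k * T k) = ((1 + \<delta> k) * C k * P k) * (a k * T k)" by simp
    also have "\<dots> \<le> ((1 + \<delta> k) * C k * P k) * T (Suc k)"
    proof (rule mult_left_mono[OF aT])
      have "0 \<le> P k" using P1[of k] by linarith
      then show "0 \<le> (1 + \<delta> k) * C k * P k" using C0'[of k] d0[of k] by simp
    qed
    also have "\<eta> k * T (Suc k) \<le> \<eta> k * P (Suc k) * T (Suc k)"
    proof -
      have "\<eta> k * 1 \<le> \<eta> k * P (Suc k)" using P1 e0 by (intro mult_left_mono) auto
      then show ?thesis using T0[of "Suc k"] by (simp add: mult_right_mono)
    qed
    also have "((1 + \<delta> k) * C k * P k) * T (Suc k) + \<eta> k * P (Suc k) * T (Suc k) = C (Suc k) * P (Suc k) * T (Suc k)"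
      by (simp add: C_def P_def algebra_simps)
    finally show ?case by simp
  qed
  have "P k \<le> exp (\<Sum>i<k. \<delta> i)" unfolding P_def exp_sum[OF finite_lessThan]
    using d0 by (intro prod_mono) (auto simp: add_nonneg_nonneg exp_ge_add_one_self)
  also have "\<dots> \<le> exp D" using D by simp
  finally have Pk: "P k \<le> exp D" .
  have Ck: "C k \<le> C0 + H" using H unfolding C_def by simp
  have "W k \<le> C k * P k * T k" by (rule main)
  also have "\<dots> \<le> (C0 + H) * exp D * T k"
    using Pk Ck T0[of k] C0'[of k] P1[of k] by (intro mult_right_mono mult_mono) auto
  finally show ?thesis .
qed


lemma sum_iq:
  fixes q :: real assumes q: "0 \<le> q" "q < 1"
  shows "(\<Sum>i<k. (real i + 1) * q^i) \<le> 1 / (1 - q)\<^sup>2"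
proof -
  have eq: "(\<Sum>i<k. (real i + 1) * q^i) * (1 - q)\<^sup>2 = 1 - (real k + 1) * q^k + real k * q^(Suc k)" for k
  proof (induction k)
    case (Suc k)
    show ?case using Suc by (simp add: power2_eq_square algebra_simps)
  qed (simp)
  have "q * real k \<le> real k" using q by (intro mult_left_le_one_le) auto
  then have "0 \<le> q^k * (real k + 1 - real k * q)"
    using q by (intro mult_nonneg_nonneg) (auto simp: algebra_simps)
  then have "(\<Sum>i<k. (real i + 1) * q^i) * (1 - q)\<^sup>2 \<le> 1" unfolding eq by (simp add: algebra_simps)
  then show ?thesis using q by (simp add: field_simps)
qed

lemma sum_q:
  fixes q :: real assumes q: "0 \<le> q" "q < 1"
  shows "(\<Sum>i<k. q^i) \<le> 1 / (1 - q)"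
proof -
  have "(\<Sum>i<k. q^i) = (1 - q^k) / (1 - q)" using q by (simp add: sum_gp_strict)
  also have "\<dots> \<le> 1 / (1 - q)" using q by (intro divide_right_mono) auto
  finally show ?thesis .
qed




lemma young:
  fixes a b :: "'a::real_inner"
  assumes "\<delta> > 0"
  shows "(norm (a + b))\<^sup>2 \<le> (1 + \<delta>) * (norm a)\<^sup>2 + (1 + 1 / \<delta>) * (norm b)\<^sup>2"
proof -
  have "0 \<le> (norm (\<delta> *\<^sub>R a - b))\<^sup>2" by simp
  also have "\<dots> = \<delta>\<^sup>2 * (norm a)\<^sup>2 - 2 * \<delta> * (a \<bullet> b) + (norm b)\<^sup>2"
    by (simp add: power2_norm_eq_inner inner_diff_left inner_diff_right algebra_simps inner_commute) (simp add: power2_eq_square)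
  finally have h0: "0 \<le> \<delta>\<^sup>2 * (norm a)\<^sup>2 - 2 * \<delta> * (a \<bullet> b) + (norm b)\<^sup>2" .
  have "\<delta> * (\<delta> * (norm a)\<^sup>2 + (norm b)\<^sup>2 / \<delta>) = \<delta>\<^sup>2 * (norm a)\<^sup>2 + (norm b)\<^sup>2"
    using assms by (simp add: distrib_left power2_eq_square)
  then have h: "\<delta> * (2 * (a \<bullet> b)) \<le> \<delta> * (\<delta> * (norm a)\<^sup>2 + (norm b)\<^sup>2 / \<delta>)"
    using h0 by simp
  have "2 * (a \<bullet> b) \<le> \<delta> * (norm a)\<^sup>2 + (norm b)\<^sup>2 / \<delta>"
    using mult_left_le_imp_le[OF h] assms by simp
  moreover have "(norm (a + b))\<^sup>2 = (norm a)\<^sup>2 + 2 * (a \<bullet> b) + (norm b)\<^sup>2"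
    by (simp add: power2_norm_eq_inner inner_add_left inner_add_right inner_commute)
  ultimately show ?thesis by (simp add: algebra_simps)
qed

lemma conj_sc:
  fixes g :: "'a::real_inner \<Rightarrow> real"
  assumes up: "\<And>y. g y \<le> g \<theta> + d \<bullet> (y - \<theta>) + K / 2 * (norm (y - \<theta>))\<^sup>2"
    and m: "0 \<le> m" "m * K \<le> 1"
    and psi: "\<And>y. \<eta> \<bullet> y - g y \<le> \<psi>"
  shows "\<psi> \<ge> \<eta> \<bullet> \<theta> - g \<theta> + m / 2 * (norm (\<eta> - d))\<^sup>2"
proof -
  define y where "y = \<theta> + m *\<^sub>R (\<eta> - d)"
  have "g y \<le> g \<theta> + m * (d \<bullet> (\<eta> - d)) + K / 2 * m\<^sup>2 * (norm (\<eta> - d))\<^sup>2"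
    using up[of y] m by (simp add: y_def power2_eq_square mult_ac)
  moreover have "\<eta> \<bullet> y = \<eta> \<bullet> \<theta> + m * (\<eta> \<bullet> (\<eta> - d))" by (simp add: y_def inner_add_right)
  moreover have "m * (\<eta> \<bullet> (\<eta> - d)) - m * (d \<bullet> (\<eta> - d)) = m * (norm (\<eta> - d))\<^sup>2"
    by (simp add: power2_norm_eq_inner inner_diff_left right_diff_distrib[symmetric])
  moreover have "m / 2 * (norm (\<eta> - d))\<^sup>2 \<le> m * (norm (\<eta> - d))\<^sup>2 - K / 2 * m\<^sup>2 * (norm (\<eta> - d))\<^sup>2"
  proof -
    have "0 \<le> m * (1 - m * K) * (norm (\<eta> - d))\<^sup>2" using m by simp
    then show ?thesis by (simp add: power2_eq_square algebra_simps)
  qed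
  ultimately show ?thesis using psi[of y] by linarith
qed


lemma client:
  fixes g :: "'a::real_inner \<Rightarrow> real"
  assumes up: "\<And>y. g y \<le> g \<theta> + d \<bullet> (y - \<theta>) + K / 2 * (norm (y - \<theta>))\<^sup>2"
    and m: "0 \<le> m" "m * K \<le> 1"
    and p1: "\<And>y. \<eta>1 \<bullet> y - g y \<le> \<psi>1" and p2: "\<And>y. \<eta>2 \<bullet> y - g y \<le> \<psi>2"
    and pg: "\<psi>p \<le> \<epsilon> + \<xi> \<bullet> \<theta> - g \<theta>" and pl: "\<And>y. \<xi> \<bullet> y - g y \<le> \<psi>p"
    and w: "0 \<le> w" "w \<le> 1" and \<delta>: "\<delta> > 0"
  shows "(1 - w) * \<psi>1 + w * \<psi>2 \<ge> \<psi>p + \<theta> \<bullet> (((1 - w) *\<^sub>R \<eta>1 + w *\<^sub>R \<eta>2) - \<xi>) - (1 + 1 / \<delta>) * \<epsilon>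
      + m / (2 * (1 + \<delta>)) * (norm (((1 - w) *\<^sub>R \<eta>1 + w *\<^sub>R \<eta>2) - \<xi>))\<^sup>2
      + m / 2 * (w * (1 - w)) * (norm (\<eta>1 - \<eta>2))\<^sup>2"
proof -
  define xb where "xb = (1 - w) *\<^sub>R \<eta>1 + w *\<^sub>R \<eta>2"
  have c1: "\<psi>1 \<ge> \<eta>1 \<bullet> \<theta> - g \<theta> + m / 2 * (norm (\<eta>1 - d))\<^sup>2" by (rule conj_sc[OF up m p1])
  have c2: "\<psi>2 \<ge> \<eta>2 \<bullet> \<theta> - g \<theta> + m / 2 * (norm (\<eta>2 - d))\<^sup>2" by (rule conj_sc[OF up m p2])
  have c3: "\<psi>p \<ge> \<xi> \<bullet> \<theta> - g \<theta> + m / 2 * (norm (\<xi> - d))\<^sup>2" by (rule conj_sc[OF up m pl])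
  have e1: "m / 2 * (norm (\<xi> - d))\<^sup>2 \<le> \<epsilon>" using c3 pg by linarith
  have comb: "(1 - w) * \<psi>1 + w * \<psi>2 \<ge> xb \<bullet> \<theta> - g \<theta> + m / 2 * ((1 - w) * (norm (\<eta>1 - d))\<^sup>2 + w * (norm (\<eta>2 - d))\<^sup>2)"
  proof -
    have "(1 - w) * \<psi>1 + w * \<psi>2 \<ge> (1 - w) * (\<eta>1 \<bullet> \<theta> - g \<theta> + m / 2 * (norm (\<eta>1 - d))\<^sup>2) + w * (\<eta>2 \<bullet> \<theta> - g \<theta> + m / 2 * (norm (\<eta>2 - d))\<^sup>2)"
      using c1 c2 w by (intro add_mono mult_left_mono) auto
    moreover have "xb \<bullet> \<theta> = (1 - w) * (\<eta>1 \<bullet> \<theta>) + w * (\<eta>2 \<bullet> \<theta>)" by (simp add: xb_def inner_add_left)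
    ultimately show ?thesis by (simp add: algebra_simps diff_divide_distrib)
  qed
  have sq: "(1 - w) * (norm (\<eta>1 - d))\<^sup>2 + w * (norm (\<eta>2 - d))\<^sup>2 = (norm (xb - d))\<^sup>2 + w * (1 - w) * (norm (\<eta>1 - \<eta>2))\<^sup>2"
  proof -
    have "xb - d = (1 - w) *\<^sub>R (\<eta>1 - d) + w *\<^sub>R (\<eta>2 - d)" by (simp add: xb_def algebra_simps)
    moreover have "(\<eta>1 - d) - (\<eta>2 - d) = \<eta>1 - \<eta>2" by simp
    ultimately show ?thesis using sq_comb[of w "\<eta>1 - d" "\<eta>2 - d"] by simp
  qed
  have yg: "(norm (xb - \<xi>))\<^sup>2 \<le> (1 + \<delta>) * (norm (xb - d))\<^sup>2 + (1 + 1 / \<delta>) * (norm (d - \<xi>))\<^sup>2"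
    using young[OF \<delta>, of "xb - d" "d - \<xi>"] by simp
  have conv: "m / (2 * (1 + \<delta>)) * (norm (xb - \<xi>))\<^sup>2 \<le> m / 2 * (norm (xb - d))\<^sup>2 + \<epsilon> / \<delta>"
  proof -
    have "m / (2 * (1 + \<delta>)) * (norm (xb - \<xi>))\<^sup>2 \<le> m / (2 * (1 + \<delta>)) * ((1 + \<delta>) * (norm (xb - d))\<^sup>2 + (1 + 1 / \<delta>) * (norm (d - \<xi>))\<^sup>2)"
      using yg m \<delta> by (intro mult_left_mono) auto
    also have "\<dots> = m / 2 * (norm (xb - d))\<^sup>2 + (m / 2 * (norm (\<xi> - d))\<^sup>2) / \<delta>"
    proof -
      define X where "X = (norm (xb - d))\<^sup>2"
      define Y where "Y = (norm (\<xi> - d))\<^sup>2"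
      have Y: "(norm (d - \<xi>))\<^sup>2 = Y" by (simp add: Y_def norm_minus_commute)
      have "(1 + 1 / \<delta>) * Y = (1 + \<delta>) * (Y / \<delta>)" using \<delta> by (simp add: field_simps)
      then have e2: "(1 + \<delta>) * X + (1 + 1 / \<delta>) * Y = (1 + \<delta>) * (X + Y / \<delta>)" by (simp add: distrib_left)
      have e3: "m / (2 * (1 + \<delta>)) * ((1 + \<delta>) * Z) = m / 2 * Z" for Z
      proof -
        have "1 + \<delta> \<noteq> 0" using \<delta> by simp
        then show ?thesis by (simp add: field_simps)
      qed
      have "m / (2 * (1 + \<delta>)) * ((1 + \<delta>) * (norm (xb - d))\<^sup>2 + (1 + 1 / \<delta>) * (norm (d - \<xi>))\<^sup>2)
          = m / (2 * (1 + \<delta>)) * ((1 + \<delta>) * X + (1 + 1 / \<delta>) * Y)" by (simp add: X_def Y)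
      also have "\<dots> = m / 2 * (X + Y / \<delta>)" by (simp only: e2 e3)
      also have "\<dots> = m / 2 * X + (m / 2 * Y) / \<delta>" by (simp add: distrib_left)
      finally show ?thesis by (simp add: X_def Y_def)
    qed
    also have "\<dots> \<le> m / 2 * (norm (xb - d))\<^sup>2 + \<epsilon> / \<delta>"
      using divide_right_mono[OF e1, of \<delta>] \<delta> by simp
    finally show ?thesis .
  qed
  have "\<theta> \<bullet> (xb - \<xi>) = xb \<bullet> \<theta> - \<xi> \<bullet> \<theta>" by (simp add: inner_diff_right inner_commute)
  moreover have "m / 2 * ((1 - w) * (norm (\<eta>1 - d))\<^sup>2 + w * (norm (\<eta>2 - d))\<^sup>2) = m / 2 * (norm (xb - d))\<^sup>2 + m / 2 * (w * (1 - w)) * (norm (\<eta>1 - \<eta>2))\<^sup>2"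
    unfolding sq by (simp only: distrib_left mult.assoc)
  moreover have "(1 + 1 / \<delta>) * \<epsilon> = \<epsilon> + \<epsilon> / \<delta>" by (simp add: algebra_simps)
  ultimately show ?thesis unfolding xb_def[symmetric] using comb conv pg by linarith
qed




lemma S1:
  fixes \<xi>p y \<theta>l xb :: "nat \<Rightarrow> 'a::real_inner" and X \<Theta>p mm :: 'a
  assumes N: "N > 0" and \<nu>: "\<nu> > 0"
    and xp: "\<And>j. j < N \<Longrightarrow> \<xi>p j = y j + \<nu> *\<^sub>R mm - \<nu> *\<^sub>R \<theta>l j"
    and st: "(\<Sum>j<N. \<theta>l j) = real N *\<^sub>R \<Theta>p"
    and sx: "(\<Sum>j<N. xb j) = - (real N * \<nu>) *\<^sub>R X"
    and sp: "(\<Sum>j<N. \<xi>p j) = - (real N * \<nu>) *\<^sub>R \<Theta>p"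
    and Q: "Q \<ge> (norm X)\<^sup>2"
  shows "(\<Sum>j<N. \<theta>l j \<bullet> (xb j - \<xi>p j)) + 1 / (2 * \<nu>) * ((\<Sum>j<N. (norm (xb j - y j))\<^sup>2) - (\<Sum>j<N. (norm (xb j - \<xi>p j))\<^sup>2))
          + real N * \<nu> / 2 * (Q - (norm \<Theta>p)\<^sup>2) \<ge> 0"
proof -
  define a where "a j = xb j - \<xi>p j" for j
  define b where "b j = \<nu> *\<^sub>R (mm - \<theta>l j)" for j
  have pj: "\<theta>l j \<bullet> a j + 1 / (2 * \<nu>) * ((norm (xb j - y j))\<^sup>2 - (norm (a j))\<^sup>2) = mm \<bullet> a j + 1 / (2 * \<nu>) * (norm (b j))\<^sup>2"
    if j: "j < N" for j
  proof -
    have xy: "xb j - y j = a j + b j" using xp[OF j] by (simp add: a_def b_def algebra_simps)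
    have th: "\<theta>l j = mm - (1 / \<nu>) *\<^sub>R b j" using \<nu> by (simp add: b_def algebra_simps)
    have "(norm (a j + b j))\<^sup>2 - (norm (a j))\<^sup>2 = 2 * (a j \<bullet> b j) + (norm (b j))\<^sup>2"
      by (simp add: power2_norm_eq_inner inner_add_left inner_add_right inner_commute)
    then show ?thesis unfolding xy th using \<nu>
      by (simp add: inner_diff_left inner_diff_right inner_commute field_simps)
  qed
  have sum_eq: "(\<Sum>j<N. \<theta>l j \<bullet> (xb j - \<xi>p j)) + 1 / (2 * \<nu>) * ((\<Sum>j<N. (norm (xb j - y j))\<^sup>2) - (\<Sum>j<N. (norm (xb j - \<xi>p j))\<^sup>2))
      = mm \<bullet> (\<Sum>j<N. a j) + 1 / (2 * \<nu>) * (\<Sum>j<N. (norm (b j))\<^sup>2)"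
  proof -
    have "(\<Sum>j<N. \<theta>l j \<bullet> (xb j - \<xi>p j)) + 1 / (2 * \<nu>) * ((\<Sum>j<N. (norm (xb j - y j))\<^sup>2) - (\<Sum>j<N. (norm (xb j - \<xi>p j))\<^sup>2))
        = (\<Sum>j<N. \<theta>l j \<bullet> a j + 1 / (2 * \<nu>) * ((norm (xb j - y j))\<^sup>2 - (norm (a j))\<^sup>2))"
      by (simp add: a_def sum.distrib sum_subtractf flip: sum_divide_distrib)
    also have "\<dots> = (\<Sum>j<N. mm \<bullet> a j + 1 / (2 * \<nu>) * (norm (b j))\<^sup>2)"
      by (rule sum.cong) (use pj in auto)
    also have "\<dots> = mm \<bullet> (\<Sum>j<N. a j) + 1 / (2 * \<nu>) * (\<Sum>j<N. (norm (b j))\<^sup>2)"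
      by (simp add: sum.distrib inner_sum_right sum_distrib_left)
    finally show ?thesis .
  qed
  have sa: "(\<Sum>j<N. a j) = - (real N * \<nu>) *\<^sub>R (X - \<Theta>p)"
    unfolding a_def sum_subtractf sx sp by (simp add: algebra_simps)
  have sb: "(\<Sum>j<N. b j) = (real N * \<nu>) *\<^sub>R (mm - \<Theta>p)"
    unfolding b_def scaleR_sum_right[symmetric] sum_subtractf st by (simp add: algebra_simps sum_constant_scaleR)
  have bb: "(\<Sum>j<N. (norm (b j))\<^sup>2) \<ge> real N * \<nu>\<^sup>2 * (norm (mm - \<Theta>p))\<^sup>2"
  proof -
    have "(norm (\<Sum>j<N. b j))\<^sup>2 \<le> real N * (\<Sum>j<N. (norm (b j))\<^sup>2)" by (rule sq_sum_le)
    moreover have "(norm (\<Sum>j<N. b j))\<^sup>2 = real N * (real N * \<nu>\<^sup>2 * (norm (mm - \<Theta>p))\<^sup>2)"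
      unfolding sb using \<nu> by (simp add: power_mult_distrib power2_eq_square)
    ultimately show ?thesis using N by simp
  qed
  have "0 \<le> real N * \<nu> / 2 * (norm (X - mm))\<^sup>2" using \<nu> by simp
  also have "\<dots> = - (real N * \<nu>) * (mm \<bullet> (X - \<Theta>p)) + 1 / (2 * \<nu>) * (real N * \<nu>\<^sup>2 * (norm (mm - \<Theta>p))\<^sup>2) + real N * \<nu> / 2 * ((norm X)\<^sup>2 - (norm \<Theta>p)\<^sup>2)"
  proof -
    have n1: "(norm (X - mm))\<^sup>2 = (norm X)\<^sup>2 - 2 * (mm \<bullet> X) + (norm mm)\<^sup>2"
      by (simp add: power2_norm_eq_inner inner_diff_left inner_diff_right inner_commute)
    have n2: "(norm (mm - \<Theta>p))\<^sup>2 = (norm mm)\<^sup>2 - 2 * (mm \<bullet> \<Theta>p) + (norm \<Theta>p)\<^sup>2"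
      by (simp add: power2_norm_eq_inner inner_diff_left inner_diff_right inner_commute)
    show ?thesis unfolding n1 n2 using \<nu> by (simp add: inner_diff_right field_simps power2_eq_square)
  qed
  also have "\<dots> \<le> mm \<bullet> (\<Sum>j<N. a j) + 1 / (2 * \<nu>) * (\<Sum>j<N. (norm (b j))\<^sup>2) + real N * \<nu> / 2 * (Q - (norm \<Theta>p)\<^sup>2)"
    unfolding sa using bb Q \<nu> N by (intro add_mono mult_left_mono) auto
  finally show ?thesis unfolding sum_eq by simp
qed




lemma final_arith:
  fixes Fk Fs Fp Sy Sp A B U Err c0 c1 m w a t t' \<delta> :: real
  assumes base: "(1 - w) * Fk + w * Fs + c0 * Sy \<ge> Fp + (c0 + m / (2 * (1 + \<delta>))) * Sp - Err + m / 2 * (w * (1 - w)) * B"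
    and s2: "Sy \<le> (1 / t\<^sup>2) * ((1 - a) * B + a * A)"
    and s3: "Sp = U / t\<^sup>2"
    and K1: "c0 * (1 - a) / t\<^sup>2 = m / 2 * (w * (1 - w))"
    and K2: "c0 * a / t\<^sup>2 = c1 * (1 - w) / t'\<^sup>2"
    and K3: "c0 + m / (2 * (1 + \<delta>)) \<ge> c1 / (1 + \<delta>)"
    and pos: "c0 \<ge> 0" "\<delta> > 0" "U \<ge> 0" "Fp - Fs \<ge> 0" "t \<noteq> 0"
  shows "(Fp - Fs) + c1 * U / t\<^sup>2 \<le> (1 + \<delta>) * ((1 - w) * ((Fk - Fs) + c1 * A / t'\<^sup>2) + Err)"
proof -
  have "c0 * Sy \<le> c0 * ((1 / t\<^sup>2) * ((1 - a) * B + a * A))" using s2 pos by (intro mult_left_mono) auto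
  also have "\<dots> = (c0 * (1 - a) / t\<^sup>2) * B + (c0 * a / t\<^sup>2) * A" by (simp add: algebra_simps add_divide_distrib diff_divide_distrib)
  also have "\<dots> = m / 2 * (w * (1 - w)) * B + c1 * (1 - w) / t'\<^sup>2 * A" unfolding K1 K2 ..
  finally have cy: "c0 * Sy \<le> m / 2 * (w * (1 - w)) * B + c1 * (1 - w) / t'\<^sup>2 * A" .
  have U0: "U / t\<^sup>2 \<ge> 0" using pos by simp
  have "c1 / (1 + \<delta>) * (U / t\<^sup>2) \<le> (c0 + m / (2 * (1 + \<delta>))) * (U / t\<^sup>2)"
    using K3 U0 by (rule mult_right_mono)
  then have main: "(Fp - Fs) + c1 / (1 + \<delta>) * (U / t\<^sup>2) \<le> (1 - w) * (Fk - Fs) + c1 * (1 - w) / t'\<^sup>2 * A + Err"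
    using base cy s3 by (simp add: algebra_simps)
  have "(Fp - Fs) + c1 * U / t\<^sup>2 \<le> (1 + \<delta>) * ((Fp - Fs) + c1 / (1 + \<delta>) * (U / t\<^sup>2))"
  proof -
    have "(Fp - Fs) \<le> (1 + \<delta>) * (Fp - Fs)" using pos by (simp add: algebra_simps)
    moreover have "(1 + \<delta>) * (c1 / (1 + \<delta>) * (U / t\<^sup>2)) = c1 * U / t\<^sup>2" using pos by simp
    ultimately show ?thesis by (simp add: distrib_left)
  qed
  also have "\<dots> \<le> (1 + \<delta>) * ((1 - w) * (Fk - Fs) + c1 * (1 - w) / t'\<^sup>2 * A + Err)"
    using main pos by (intro mult_left_mono) auto
  also have "\<dots> = (1 + \<delta>) * ((1 - w) * ((Fk - Fs) + c1 * A / t'\<^sup>2) + Err)"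
    by (simp add: algebra_simps)
  finally show ?thesis .
qed


lemma step:
  fixes \<xi>k \<xi>km \<xi>p \<xi>s \<theta>l :: "nat \<Rightarrow> 'a::real_inner" and \<Theta>k \<Theta>s \<Theta>p mm :: 'a
    and \<Psi>k \<Psi>s \<Psi>p \<epsilon> \<delta> \<nu> \<rho> t t' \<beta> m :: real
  assumes N: "N > 0" and \<nu>: "\<nu> > 0" and \<rho>: "0 \<le> \<rho>" "\<rho> < 1"
    and t: "t \<ge> 1" "t' \<ge> 1" "\<rho> * t \<le> 1"
    and trec: "t\<^sup>2 - t = t'\<^sup>2 * (1 - \<rho> * t)"
    and \<beta>: "\<beta> = (t' - 1) / t * ((1 - t * \<rho>) / (1 - \<rho>))"
    and \<delta>: "\<delta> > 0" and m: "m = \<rho> / (\<nu> * (1 - \<rho>))"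
    and xp: "\<And>j. j < N \<Longrightarrow> \<xi>p j = ((1 + \<beta>) *\<^sub>R \<xi>k j - \<beta> *\<^sub>R \<xi>km j) + \<nu> *\<^sub>R mm - \<nu> *\<^sub>R \<theta>l j"
    and st: "(\<Sum>j<N. \<theta>l j) = real N *\<^sub>R \<Theta>p"
    and sk: "(\<Sum>j<N. \<xi>k j) = - (real N * \<nu>) *\<^sub>R \<Theta>k"
    and ss: "(\<Sum>j<N. \<xi>s j) = - (real N * \<nu>) *\<^sub>R \<Theta>s"
    and sp: "(\<Sum>j<N. \<xi>p j) = - (real N * \<nu>) *\<^sub>R \<Theta>p"
    and cl: "(1 - 1 / t) * \<Psi>k + (1 / t) * \<Psi>s \<ge> \<Psi>p
        + (\<Sum>j<N. \<theta>l j \<bullet> (((1 - 1 / t) *\<^sub>R \<xi>k j + (1 / t) *\<^sub>R \<xi>s j) - \<xi>p j)) - real N * ((1 + 1 / \<delta>) * \<epsilon>)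
        + m / (2 * (1 + \<delta>)) * (\<Sum>j<N. (norm (((1 - 1 / t) *\<^sub>R \<xi>k j + (1 / t) *\<^sub>R \<xi>s j) - \<xi>p j))\<^sup>2)
        + m / 2 * ((1 / t) * (1 - 1 / t)) * (\<Sum>j<N. (norm (\<xi>k j - \<xi>s j))\<^sup>2)"
    and ep: "\<Psi>p + real N * \<nu> / 2 * (norm \<Theta>p)\<^sup>2 - (\<Psi>s + real N * \<nu> / 2 * (norm \<Theta>s)\<^sup>2) \<ge> 0"
  shows "(\<Psi>p + real N * \<nu> / 2 * (norm \<Theta>p)\<^sup>2 - (\<Psi>s + real N * \<nu> / 2 * (norm \<Theta>s)\<^sup>2))
          + 1 / (2 * \<nu> * (1 - \<rho>)) * (\<Sum>j<N. (norm (\<xi>k j + t *\<^sub>R (\<xi>p j - \<xi>k j) - \<xi>s j))\<^sup>2) / t\<^sup>2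
       \<le> (1 + \<delta>) * ((1 - 1 / t) * ((\<Psi>k + real N * \<nu> / 2 * (norm \<Theta>k)\<^sup>2 - (\<Psi>s + real N * \<nu> / 2 * (norm \<Theta>s)\<^sup>2))
          + 1 / (2 * \<nu> * (1 - \<rho>)) * (\<Sum>j<N. (norm (\<xi>km j + t' *\<^sub>R (\<xi>k j - \<xi>km j) - \<xi>s j))\<^sup>2) / t'\<^sup>2)
          + real N * ((1 + 1 / \<delta>) * \<epsilon>))"
proof -
  define w where "w = 1 / t"
  define a where "a = (1 - t * \<rho>) / (1 - \<rho>)"
  define c0 where "c0 = 1 / (2 * \<nu>)"
  define c1 where "c1 = 1 / (2 * \<nu> * (1 - \<rho>))"
  define xb where "xb j = (1 - w) *\<^sub>R \<xi>k j + w *\<^sub>R \<xi>s j" for j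
  define y where "y j = (1 + \<beta>) *\<^sub>R \<xi>k j - \<beta> *\<^sub>R \<xi>km j" for j
  define u where "u j = \<xi>km j + t' *\<^sub>R (\<xi>k j - \<xi>km j)" for j
  define u' where "u' j = \<xi>k j + t *\<^sub>R (\<xi>p j - \<xi>k j)" for j
  define X where "X = (1 - w) *\<^sub>R \<Theta>k + w *\<^sub>R \<Theta>s"
  define Q where "Q = (1 - w) * (norm \<Theta>k)\<^sup>2 + w * (norm \<Theta>s)\<^sup>2"
  have t0: "t \<noteq> 0" "t > 0" using t by auto
  have w01: "0 \<le> w" "w \<le> 1" using t by (auto simp: w_def)
  have rt: "\<rho> \<le> \<rho> * t" using t \<rho> by (simp add: mult_le_cancel_left1)
  have a01: "0 \<le> a" "a \<le> 1" using t \<rho> rt by (auto simp: a_def field_simps mult.commute)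
  have tw: "t * w = 1" using t0 by (simp add: w_def)
  have tb: "t * \<beta> = a * (t' - 1)" using t0 by (simp add: \<beta> a_def)
  have QX: "Q \<ge> (norm X)\<^sup>2" unfolding Q_def X_def using sq_comb[of w \<Theta>k \<Theta>s] w01
    by (simp add: mult_nonneg_nonneg)
  have sx: "(\<Sum>j<N. xb j) = - (real N * \<nu>) *\<^sub>R X"
    unfolding xb_def X_def sum.distrib scaleR_sum_right[symmetric] sk ss by (simp add: algebra_simps)
  have S1': "(\<Sum>j<N. \<theta>l j \<bullet> (xb j - \<xi>p j)) + 1 / (2 * \<nu>) * ((\<Sum>j<N. (norm (xb j - y j))\<^sup>2) - (\<Sum>j<N. (norm (xb j - \<xi>p j))\<^sup>2))
          + real N * \<nu> / 2 * (Q - (norm \<Theta>p)\<^sup>2) \<ge> 0"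
    by (rule S1[OF N \<nu> _ st sx sp QX, where mm=mm]) (simp add: xp y_def)
  have S2j: "(norm (xb j - y j))\<^sup>2 \<le> (1 / t\<^sup>2) * ((1 - a) * (norm (\<xi>k j - \<xi>s j))\<^sup>2 + a * (norm (u j - \<xi>s j))\<^sup>2)" for j
  proof -
    have "t *\<^sub>R (xb j - y j) = (1 - a) *\<^sub>R (\<xi>s j - \<xi>k j) + a *\<^sub>R (\<xi>s j - u j)"
    proof -
      have "t *\<^sub>R (xb j - y j) = (t - t * w) *\<^sub>R \<xi>k j + (t * w) *\<^sub>R \<xi>s j - (t + t * \<beta>) *\<^sub>R \<xi>k j + (t * \<beta>) *\<^sub>R \<xi>km j"
        by (simp add: xb_def y_def algebra_simps)
      also have "\<dots> = (1 - a) *\<^sub>R (\<xi>s j - \<xi>k j) + a *\<^sub>R (\<xi>s j - u j)"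
        unfolding tw tb u_def by (simp add: algebra_simps)
      finally show ?thesis .
    qed
    then have "xb j - y j = (1 / t) *\<^sub>R ((1 - a) *\<^sub>R (\<xi>s j - \<xi>k j) + a *\<^sub>R (\<xi>s j - u j))"
    proof -
      have "xb j - y j = (1 / t) *\<^sub>R (t *\<^sub>R (xb j - y j))" using t0 by simp
      then show ?thesis using \<open>t *\<^sub>R (xb j - y j) = _\<close> by simp
    qed
    then have "(norm (xb j - y j))\<^sup>2 = (1 / t\<^sup>2) * (norm ((1 - a) *\<^sub>R (\<xi>s j - \<xi>k j) + a *\<^sub>R (\<xi>s j - u j)))\<^sup>2"
      by (simp add: power_mult_distrib power_divide)
    also have "\<dots> \<le> (1 / t\<^sup>2) * ((1 - a) * (norm (\<xi>s j - \<xi>k j))\<^sup>2 + a * (norm (\<xi>s j - u j))\<^sup>2)"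
    proof (rule mult_left_mono)
      show "(norm ((1 - a) *\<^sub>R (\<xi>s j - \<xi>k j) + a *\<^sub>R (\<xi>s j - u j)))\<^sup>2 \<le> (1 - a) * (norm (\<xi>s j - \<xi>k j))\<^sup>2 + a * (norm (\<xi>s j - u j))\<^sup>2"
        using sq_comb[of a "\<xi>s j - \<xi>k j" "\<xi>s j - u j"] a01 by (simp add: mult_nonneg_nonneg)
    qed simp
    finally show ?thesis by (simp add: norm_minus_commute)
  qed
  have S2: "(\<Sum>j<N. (norm (xb j - y j))\<^sup>2) \<le> (1 / t\<^sup>2) * ((1 - a) * (\<Sum>j<N. (norm (\<xi>k j - \<xi>s j))\<^sup>2) + a * (\<Sum>j<N. (norm (u j - \<xi>s j))\<^sup>2))"
  proof -
    have "(\<Sum>j<N. (norm (xb j - y j))\<^sup>2) \<le> (\<Sum>j<N. (1 / t\<^sup>2) * ((1 - a) * (norm (\<xi>k j - \<xi>s j))\<^sup>2 + a * (norm (u j - \<xi>s j))\<^sup>2))"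
      by (rule sum_mono) (rule S2j)
    also have "\<dots> = (1 / t\<^sup>2) * ((1 - a) * (\<Sum>j<N. (norm (\<xi>k j - \<xi>s j))\<^sup>2) + a * (\<Sum>j<N. (norm (u j - \<xi>s j))\<^sup>2))"
      by (simp only: sum.distrib flip: sum_distrib_left)
    finally show ?thesis .
  qed
  have S3j: "(norm (xb j - \<xi>p j))\<^sup>2 = (norm (u' j - \<xi>s j))\<^sup>2 / t\<^sup>2" for j
  proof -
    have "t *\<^sub>R (xb j - \<xi>p j) = (t - t * w) *\<^sub>R \<xi>k j + (t * w) *\<^sub>R \<xi>s j - t *\<^sub>R \<xi>p j"
      by (simp add: xb_def algebra_simps)
    also have "\<dots> = - (u' j - \<xi>s j)" unfolding tw u'_def by (simp add: algebra_simps)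
    finally have "t *\<^sub>R (xb j - \<xi>p j) = - (u' j - \<xi>s j)" .
    then have "(norm (t *\<^sub>R (xb j - \<xi>p j)))\<^sup>2 = (norm (u' j - \<xi>s j))\<^sup>2" by (simp only: norm_minus_cancel)
    then have "t\<^sup>2 * (norm (xb j - \<xi>p j))\<^sup>2 = (norm (u' j - \<xi>s j))\<^sup>2" by (simp add: power_mult_distrib)
    then show ?thesis using t0 by (simp add: field_simps)
  qed
  have S3: "(\<Sum>j<N. (norm (xb j - \<xi>p j))\<^sup>2) = (\<Sum>j<N. (norm (u' j - \<xi>s j))\<^sup>2) / t\<^sup>2"
    by (simp add: S3j sum_divide_distrib)
  define Fk where "Fk = \<Psi>k + real N * \<nu> / 2 * (norm \<Theta>k)\<^sup>2"
  define Fs where "Fs = \<Psi>s + real N * \<nu> / 2 * (norm \<Theta>s)\<^sup>2"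
  define Fp where "Fp = \<Psi>p + real N * \<nu> / 2 * (norm \<Theta>p)\<^sup>2"
  define Sy where "Sy = (\<Sum>j<N. (norm (xb j - y j))\<^sup>2)"
  define Sp where "Sp = (\<Sum>j<N. (norm (xb j - \<xi>p j))\<^sup>2)"
  define Sth where "Sth = (\<Sum>j<N. \<theta>l j \<bullet> (xb j - \<xi>p j))"
  define B where "B = (\<Sum>j<N. (norm (\<xi>k j - \<xi>s j))\<^sup>2)"
  define A where "A = (\<Sum>j<N. (norm (u j - \<xi>s j))\<^sup>2)"
  define U where "U = (\<Sum>j<N. (norm (u' j - \<xi>s j))\<^sup>2)"
  define Err where "Err = real N * ((1 + 1 / \<delta>) * \<epsilon>)"
  have cl': "(1 - w) * \<Psi>k + w * \<Psi>s \<ge> \<Psi>p + Sth - Err + m / (2 * (1 + \<delta>)) * Sp + m / 2 * (w * (1 - w)) * B"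
    using cl unfolding w_def[symmetric] xb_def[symmetric] Sth_def[symmetric] Sp_def[symmetric] B_def[symmetric] Err_def[symmetric] .
  have S1'': "Sth + c0 * Sy - c0 * Sp + real N * \<nu> / 2 * Q - real N * \<nu> / 2 * (norm \<Theta>p)\<^sup>2 \<ge> 0"
    using S1' unfolding Sth_def[symmetric] Sy_def[symmetric] Sp_def[symmetric] c0_def[symmetric] right_diff_distrib by linarith
  have FQ: "(1 - w) * Fk + w * Fs = (1 - w) * \<Psi>k + w * \<Psi>s + real N * \<nu> / 2 * Q"
    unfolding Fk_def Fs_def Q_def by (simp add: field_simps)
  have base: "(1 - w) * Fk + w * Fs + c0 * Sy \<ge> Fp + (c0 + m / (2 * (1 + \<delta>))) * Sp - Err + m / 2 * (w * (1 - w)) * B"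
    using cl' S1'' FQ unfolding Fp_def by (simp add: algebra_simps)
  have K1: "c0 * (1 - a) / t\<^sup>2 = m / 2 * (w * (1 - w))"
  proof -
    have r1: "1 - \<rho> \<noteq> 0" using \<rho> by simp
    have "1 - a = \<rho> * (t - 1) / (1 - \<rho>)" unfolding a_def using r1 by (simp add: field_simps)
    then have "c0 * (1 - a) / t\<^sup>2 = 1 / (2 * \<nu>) * (\<rho> * (t - 1) / (1 - \<rho>)) / t\<^sup>2" by (simp only: c0_def)
    also have "\<dots> = m / 2 * (w * (1 - w))" using t0 \<nu> r1 unfolding m w_def by (simp add: field_simps power2_eq_square)
    finally show ?thesis .
  qed
  have K2: "c0 * a / t\<^sup>2 = c1 * (1 - w) / t'\<^sup>2"
  proof -
    have t'0: "t' \<noteq> 0" using t by auto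
    have "(1 - \<rho> * t) / t\<^sup>2 = (1 - w) / t'\<^sup>2"
    proof -
      have "1 - \<rho> * t = (t\<^sup>2 - t) / t'\<^sup>2" using trec t'0 by simp
      then have "(1 - \<rho> * t) / t\<^sup>2 = (t\<^sup>2 - t) / (t'\<^sup>2 * t\<^sup>2)" by simp
      also have "\<dots> = (1 - w) / t'\<^sup>2" using t0 t'0 unfolding w_def by (simp add: field_simps power2_eq_square)
      finally show ?thesis .
    qed
    moreover have "c0 * a / t\<^sup>2 = c1 * ((1 - \<rho> * t) / t\<^sup>2)"
      using \<rho> \<nu> unfolding c0_def c1_def a_def by (simp add: field_simps mult.commute)
    ultimately show ?thesis by simp
  qed
  have K3: "c0 + m / (2 * (1 + \<delta>)) \<ge> c1 / (1 + \<delta>)"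
  proof -
    have "c1 = c0 + m / 2" using \<rho> \<nu> unfolding c0_def c1_def m by (simp add: field_simps)
    then have "c1 / (1 + \<delta>) = c0 / (1 + \<delta>) + m / (2 * (1 + \<delta>))" by (simp add: add_divide_distrib)
    moreover have "c0 / (1 + \<delta>) \<le> c0" using \<delta> \<nu> unfolding c0_def by (simp add: divide_le_eq)
    ultimately show ?thesis by simp
  qed
  have fa: "(Fp - Fs) + c1 * U / t\<^sup>2 \<le> (1 + \<delta>) * ((1 - w) * ((Fk - Fs) + c1 * A / t'\<^sup>2) + Err)"
  proof (rule final_arith[OF base _ _ K1 K2 K3])
    show "Sy \<le> 1 / t\<^sup>2 * ((1 - a) * B + a * A)" using S2 unfolding Sy_def B_def A_def .
    show "Sp = U / t\<^sup>2" using S3 unfolding Sp_def U_def .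
  qed (use \<nu> \<delta> ep t0 in \<open>auto simp: c0_def U_def Fp_def Fs_def intro: sum_nonneg\<close>)
  then show ?thesis unfolding Fp_def Fs_def Fk_def U_def A_def u_def u'_def c1_def w_def Err_def .
qed




lemma zeta_rep:
  "dualfl_zeta \<rho> th thj (Suc k) = (1 + dualfl_beta \<rho> k) *\<^sub>R (dualfl_zeta \<rho> th thj k + th (Suc k) - thj (Suc k))
      - dualfl_beta \<rho> k *\<^sub>R (if k = 0 then th 0 - thj 0 else dualfl_zeta \<rho> th thj (k - 1) + th k - thj k)"
  by (cases k) auto

lemma zeta_sum:
  fixes \<theta>loc :: "nat \<Rightarrow> nat \<Rightarrow> 'a::real_vector"
  assumes N: "N > 0" and th: "\<And>n. \<theta> n = (1 / real N) *\<^sub>R (\<Sum>j<N. \<theta>loc j n)"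
  shows "(\<Sum>j<N. dualfl_zeta \<rho> \<theta> (\<theta>loc j) n) = 0"
proof (induction n rule: less_induct)
  case (less n)
  have Z: "(\<Sum>j<N. \<theta> k - \<theta>loc j k) = 0" for k
    using N by (simp add: sum_subtractf th sum_constant_scaleR)
  show ?case
  proof (cases n)
    case 0 then show ?thesis by simp
  next
    case (Suc k)
    have "(\<Sum>j<N. dualfl_zeta \<rho> \<theta> (\<theta>loc j) (Suc k)) =
      (1 + dualfl_beta \<rho> k) *\<^sub>R ((\<Sum>j<N. dualfl_zeta \<rho> \<theta> (\<theta>loc j) k) + (\<Sum>j<N. \<theta> (Suc k) - \<theta>loc j (Suc k)))
      - dualfl_beta \<rho> k *\<^sub>R (if k = 0 then (\<Sum>j<N. \<theta> 0 - \<theta>loc j 0) else (\<Sum>j<N. dualfl_zeta \<rho> \<theta> (\<theta>loc j) (k - 1)) + (\<Sum>j<N. \<theta> k - \<theta>loc j k))"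
      by (simp add: zeta_rep scaleR_sum_right sum_subtractf sum.distrib algebra_simps)
    also have "\<dots> = 0" using less Suc Z by simp
    finally show ?thesis using Suc by simp
  qed
qed

lemma sum_client:
  fixes p1 p2 pp th X Y :: "nat \<Rightarrow> real"
  assumes "\<And>j. j < N \<Longrightarrow> (1 - w) * p1 j + w * p2 j \<ge> pp j + th j - c * \<epsilon> + A1 * X j + A2 * Y j"
  shows "(1 - w) * (\<Sum>j<N. p1 j) + w * (\<Sum>j<N. p2 j) \<ge> (\<Sum>j<N. pp j) + (\<Sum>j<N. th j) - real N * (c * \<epsilon>) + A1 * (\<Sum>j<N. X j) + A2 * (\<Sum>j<N. Y j)"
proof -
  have "(\<Sum>j<N. pp j + th j - c * \<epsilon> + A1 * X j + A2 * Y j) \<le> (\<Sum>j<N. (1 - w) * p1 j + w * p2 j)"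
    using assms by (intro sum_mono) auto
  then show ?thesis by (simp add: sum.distrib sum_subtractf sum_distrib_left)
qed

lemma gap_extract:
  fixes h :: "'a::real_inner \<Rightarrow> real"
  assumes gap: "dualfl_gap \<nu> h z \<theta> \<le> ereal \<epsilon>" and \<nu>: "\<nu> > 0"
  defines "g \<equiv> \<lambda>x. h x - \<nu> / 2 * (norm x)\<^sup>2"
  defines "\<xi> \<equiv> \<nu> *\<^sub>R (z - \<theta>)"
  shows "real_of_ereal (fconj g \<xi>) \<le> \<epsilon> + \<xi> \<bullet> \<theta> - g \<theta>"
    and "\<And>y. \<xi> \<bullet> y - g y \<le> real_of_ereal (fconj g \<xi>)"
proof -
  have low: "ereal (\<xi> \<bullet> y - g y) \<le> fconj g \<xi>" for y
    unfolding fconj_def by (rule SUP_upper) auto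
  have eq: "dualfl_gap \<nu> h z \<theta> = ereal (h \<theta> - \<nu> * (z \<bullet> \<theta>)) + (fconj g \<xi> + ereal (\<nu> / 2 * (norm \<theta>)\<^sup>2))"
  proof -
    have "(norm (\<nu> *\<^sub>R (z - \<theta>) - \<nu> *\<^sub>R z))\<^sup>2 = \<nu>\<^sup>2 * (norm \<theta>)\<^sup>2"
      by (simp add: algebra_simps power_mult_distrib)
    then have q: "1 / (2 * \<nu>) * (norm (\<nu> *\<^sub>R (z - \<theta>) - \<nu> *\<^sub>R z))\<^sup>2 = \<nu> / 2 * (norm \<theta>)\<^sup>2"
      using \<nu> by (simp add: power2_eq_square)
    show ?thesis unfolding dualfl_gap_def g_def \<xi>_def q ..
  qed
  have fin: "fconj g \<xi> \<noteq> \<infinity>"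
  proof
    assume "fconj g \<xi> = \<infinity>"
    then have "dualfl_gap \<nu> h z \<theta> = \<infinity>" unfolding eq by simp
    then show False using gap by simp
  qed
  have fin2: "fconj g \<xi> \<noteq> - \<infinity>" using low[of 0] by auto
  then obtain r where r: "fconj g \<xi> = ereal r" using fin by (cases "fconj g \<xi>") auto
  have "ereal (h \<theta> - \<nu> * (z \<bullet> \<theta>) + (r + \<nu> / 2 * (norm \<theta>)\<^sup>2)) \<le> ereal \<epsilon>"
    using gap unfolding eq r by simp
  then have "h \<theta> - \<nu> * (z \<bullet> \<theta>) + (r + \<nu> / 2 * (norm \<theta>)\<^sup>2) \<le> \<epsilon>" by simp
  moreover have "\<xi> \<bullet> \<theta> - g \<theta> = \<nu> * (z \<bullet> \<theta>) - h \<theta> - \<nu> / 2 * (norm \<theta>)\<^sup>2"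
    unfolding \<xi>_def g_def by (simp add: inner_diff_left power2_norm_eq_inner algebra_simps)
  ultimately show "real_of_ereal (fconj g \<xi>) \<le> \<epsilon> + \<xi> \<bullet> \<theta> - g \<theta>" using r by simp
  show "\<xi> \<bullet> y - g y \<le> real_of_ereal (fconj g \<xi>)" for y using low[of y] r by simp
qed




lemma sq_expand:
  fixes x y :: "'a::real_inner"
  shows "(norm y)\<^sup>2 = (norm x)\<^sup>2 + 2 * (x \<bullet> (y - x)) + (norm (y - x))\<^sup>2"
  by (simp add: power2_norm_eq_inner inner_diff_left inner_diff_right inner_commute)

lemma g_upper:
  fixes f :: "'a::real_inner \<Rightarrow> real"
  assumes hd: "\<And>x. (f has_derivative (\<lambda>v. G x \<bullet> v)) (at x)"
    and lip: "\<And>x y. norm (G x - G y) \<le> L * norm (x - y)"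
  shows "f y - \<nu> / 2 * (norm y)\<^sup>2 \<le> (f \<theta> - \<nu> / 2 * (norm \<theta>)\<^sup>2) + (G \<theta> - \<nu> *\<^sub>R \<theta>) \<bullet> (y - \<theta>) + (L - \<nu>) / 2 * (norm (y - \<theta>))\<^sup>2"
proof -
  have "f y \<le> f \<theta> + G \<theta> \<bullet> (y - \<theta>) + L / 2 * (norm (y - \<theta>))\<^sup>2" by (rule descent[OF hd lip])
  moreover have "(norm y)\<^sup>2 = (norm \<theta>)\<^sup>2 + 2 * (\<theta> \<bullet> (y - \<theta>)) + (norm (y - \<theta>))\<^sup>2" by (rule sq_expand)
  then have "\<nu> / 2 * (norm y)\<^sup>2 = \<nu> / 2 * (norm \<theta>)\<^sup>2 + \<nu> * (\<theta> \<bullet> (y - \<theta>)) + \<nu> / 2 * (norm (y - \<theta>))\<^sup>2"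
    by (simp only:) (simp add: algebra_simps)
  moreover have "(G \<theta> - \<nu> *\<^sub>R \<theta>) \<bullet> (y - \<theta>) = G \<theta> \<bullet> (y - \<theta>) - \<nu> * (\<theta> \<bullet> (y - \<theta>))"
    by (simp add: inner_diff_left)
  moreover have "(L - \<nu>) / 2 * (norm (y - \<theta>))\<^sup>2 = L / 2 * (norm (y - \<theta>))\<^sup>2 - \<nu> / 2 * (norm (y - \<theta>))\<^sup>2"
    by (simp add: left_diff_distrib diff_divide_distrib)
  ultimately show ?thesis by linarith
qed

lemma g_tangent:
  fixes f :: "'a::real_inner \<Rightarrow> real"
  assumes sc: "strongly_convex \<mu> f" and \<nu>: "\<nu> \<le> \<mu>"
    and hd: "\<And>x. (f has_derivative (\<lambda>v. G x \<bullet> v)) (at x)"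
  shows "f y - \<nu> / 2 * (norm y)\<^sup>2 \<ge> (f x - \<nu> / 2 * (norm x)\<^sup>2) + (G x - \<nu> *\<^sub>R x) \<bullet> (y - x)"
proof -
  define h where "h z = f z - \<mu> / 2 * (norm z)\<^sup>2" for z
  have cv: "convex_on UNIV h" using sc unfolding strongly_convex_def h_def .
  have dn: "((\<lambda>z. z \<bullet> z) has_derivative (\<lambda>v. x \<bullet> v + v \<bullet> x)) (at x)"
    by (rule has_derivative_inner[OF has_derivative_ident has_derivative_ident])
  have "(h has_derivative (\<lambda>v. G x \<bullet> v - \<mu> / 2 * (x \<bullet> v + v \<bullet> x))) (at x)"
    unfolding h_def power2_norm_eq_inner by (intro has_derivative_diff hd has_derivative_mult_right dn)
  moreover have "(\<lambda>v. G x \<bullet> v - \<mu> / 2 * (x \<bullet> v + v \<bullet> x)) = (\<lambda>v. (G x - \<mu> *\<^sub>R x) \<bullet> v)"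
    by (auto simp: inner_diff_left inner_commute algebra_simps)
  ultimately have "(h has_derivative (\<lambda>v. (G x - \<mu> *\<^sub>R x) \<bullet> v)) (at x)" by simp
  from tangent[OF cv this] have t: "h y \<ge> h x + (G x - \<mu> *\<^sub>R x) \<bullet> (y - x)" .
  have e: "(norm y)\<^sup>2 = (norm x)\<^sup>2 + 2 * (x \<bullet> (y - x)) + (norm (y - x))\<^sup>2" by (rule sq_expand)
  have "0 \<le> (\<mu> - \<nu>) / 2 * (norm (y - x))\<^sup>2" using \<nu> by simp
  moreover have c1: "c / 2 * (norm y)\<^sup>2 = c / 2 * (norm x)\<^sup>2 + c * (x \<bullet> (y - x)) + c / 2 * (norm (y - x))\<^sup>2" for c
    by (simp only: e) (simp add: algebra_simps)
  moreover have c2: "(G x - c *\<^sub>R x) \<bullet> (y - x) = G x \<bullet> (y - x) - c * (x \<bullet> (y - x))" for c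
    by (simp add: inner_diff_left)
  moreover have "(\<mu> - \<nu>) / 2 * (norm (y - x))\<^sup>2 = \<mu> / 2 * (norm (y - x))\<^sup>2 - \<nu> / 2 * (norm (y - x))\<^sup>2"
    by (simp add: left_diff_distrib diff_divide_distrib)
  ultimately show ?thesis using t c1[of \<mu>] c1[of \<nu>] c2[of \<mu>] c2[of \<nu>] unfolding h_def by linarith
qed




locale dfl =
  fixes N :: nat and f :: "nat \<Rightarrow> 'a::euclidean_space \<Rightarrow> real"
    and \<mu> L \<rho> \<nu> \<gamma> :: real and \<theta>star :: 'a
    and \<theta>loc :: "nat \<Rightarrow> nat \<Rightarrow> 'a" and E :: "'a \<Rightarrow> real" and \<theta> :: "nat \<Rightarrow> 'a"
    and GG :: "nat \<Rightarrow> 'a \<Rightarrow> 'a"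
  assumes E_def: "E = (\<lambda>x. (\<Sum>j<N. f j x) / real N)"
    and \<theta>_def: "\<theta> = (\<lambda>n. (1 / real N) *\<^sub>R (\<Sum>j<N. \<theta>loc j n))"
    and N: "N > 0" and \<mu>: "\<mu> > 0" and L: "L > 0"
    and sc: "\<And>j. j < N \<Longrightarrow> strongly_convex \<mu> (f j)"
    and hd: "\<And>j x. j < N \<Longrightarrow> (f j has_derivative (\<lambda>v. GG j x \<bullet> v)) (at x)"
    and lip: "\<And>j x y. j < N \<Longrightarrow> norm (GG j x - GG j y) \<le> L * norm (x - y)"
    and min: "\<And>x. E \<theta>star \<le> E x"
    and \<rho>0: "0 \<le> \<rho>" and \<rho>L: "\<rho> \<le> \<nu> / L" and \<nu>: "0 < \<nu>" and \<nu>\<mu>: "\<nu> \<le> \<mu>"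
    and \<gamma>: "\<gamma> > 0"
    and init: "\<And>j. j < N \<Longrightarrow> \<theta>loc j 0 = 0"
    and gap: "\<And>j n. j < N \<Longrightarrow>
           dualfl_gap \<nu> (f j) (dualfl_zeta \<rho> \<theta> (\<theta>loc j) n) (\<theta>loc j (Suc n))
             \<le> ereal (1 / real N * ((1 - sqrt \<rho>) / (1 + \<gamma>)) ^ n)"
begin

definition "g j x = f j x - \<nu> / 2 * (norm x)\<^sup>2"
definition "\<zeta> n j = dualfl_zeta \<rho> \<theta> (\<theta>loc j) n"
definition "\<xi> n j = (if n = 0 then 0 else \<nu> *\<^sub>R (\<zeta> (n - 1) j - \<theta>loc j n))"
definition "\<epsilon> n = 1 / real N * ((1 - sqrt \<rho>) / (1 + \<gamma>)) ^ n"
definition "\<psi> n j = real_of_ereal (fconj (g j) (\<xi> n j))"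
definition "\<xi>s j = GG j \<theta>star - \<nu> *\<^sub>R \<theta>star"
definition "\<psi>s j = \<xi>s j \<bullet> \<theta>star - g j \<theta>star"

lemma theta0: "\<theta> 0 = 0" using init by (simp add: \<theta>_def)

lemma grad_sum: "(\<Sum>j<N. GG j \<theta>star) = 0"
proof -
  define S where "S = (\<Sum>j<N. GG j \<theta>star)"
  have "((\<lambda>x. (1 / real N) * (\<Sum>j<N. f j x)) has_derivative (\<lambda>v. (1 / real N) * (\<Sum>j<N. GG j \<theta>star \<bullet> v))) (at \<theta>star)"
    by (intro has_derivative_mult_right has_derivative_sum hd) auto
  moreover have "(\<lambda>x. (1 / real N) * (\<Sum>j<N. f j x)) = E" by (auto simp: E_def)
  ultimately have d: "(E has_derivative (\<lambda>v. (1 / real N) * (\<Sum>j<N. GG j \<theta>star \<bullet> v))) (at \<theta>star)" by simp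
  have "(\<lambda>v. (1 / real N) * (\<Sum>j<N. GG j \<theta>star \<bullet> v)) = (\<lambda>h. 0)"
    by (rule has_derivative_local_min[OF d]) (simp add: min always_eventually)
  then have "(1 / real N) * (\<Sum>j<N. GG j \<theta>star \<bullet> S) = 0" by (metis (mono_tags))
  then have "S \<bullet> S = 0" using N by (simp add: S_def inner_sum_left)
  then show ?thesis by (simp add: S_def)
qed

lemma zeta_sum': "(\<Sum>j<N. \<zeta> n j) = 0"
  unfolding \<zeta>_def by (rule zeta_sum[OF N]) (simp add: \<theta>_def)

lemma xi_sum: "(\<Sum>j<N. \<xi> n j) = - (real N * \<nu>) *\<^sub>R \<theta> n"
proof (cases n)
  case 0 then show ?thesis by (simp add: \<xi>_def theta0)
next
  case (Suc k)
  have "(\<Sum>j<N. \<xi> n j) = \<nu> *\<^sub>R ((\<Sum>j<N. \<zeta> k j) - (\<Sum>j<N. \<theta>loc j n))"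
    by (simp add: \<xi>_def Suc scaleR_sum_right[symmetric] sum_subtractf)
  also have "\<dots> = - \<nu> *\<^sub>R (\<Sum>j<N. \<theta>loc j n)" by (simp add: zeta_sum')
  also have "\<dots> = - (real N * \<nu>) *\<^sub>R \<theta> n" using N by (simp add: \<theta>_def)
  finally show ?thesis .
qed

lemma xis_sum: "(\<Sum>j<N. \<xi>s j) = - (real N * \<nu>) *\<^sub>R \<theta>star"
  by (simp add: \<xi>s_def sum_subtractf grad_sum sum_constant_scaleR)

lemma gfacts:
  assumes j: "j < N"
  shows "\<psi> (Suc n) j \<le> \<epsilon> n + \<xi> (Suc n) j \<bullet> \<theta>loc j (Suc n) - g j (\<theta>loc j (Suc n))"
    and "\<And>y. \<xi> (Suc n) j \<bullet> y - g j y \<le> \<psi> (Suc n) j"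
proof -
  have e: "g j = (\<lambda>x. f j x - \<nu> / 2 * (norm x)\<^sup>2)" by (auto simp: g_def)
  have x: "\<xi> (Suc n) j = \<nu> *\<^sub>R (\<zeta> n j - \<theta>loc j (Suc n))" by (simp add: \<xi>_def)
  note ge = gap_extract[OF gap[OF j, of n] \<nu>]
  show "\<psi> (Suc n) j \<le> \<epsilon> n + \<xi> (Suc n) j \<bullet> \<theta>loc j (Suc n) - g j (\<theta>loc j (Suc n))"
    using ge(1) unfolding \<psi>_def e x \<zeta>_def \<epsilon>_def .
  show "\<xi> (Suc n) j \<bullet> y - g j y \<le> \<psi> (Suc n) j" for y
    using ge(2)[of y] unfolding \<psi>_def e x \<zeta>_def .
qed

lemma gs_tangent: "j < N \<Longrightarrow> \<xi>s j \<bullet> y - g j y \<le> \<psi>s j"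
  using g_tangent[OF sc \<nu>\<mu> hd, where x=\<theta>star and y=y]
  by (simp add: \<psi>s_def \<xi>s_def g_def inner_diff_right inner_commute algebra_simps)


definition "\<Psi> n = (\<Sum>j<N. \<psi> n j)"
definition "\<Psi>s = (\<Sum>j<N. \<psi>s j)"
definition "F n = \<Psi> n + real N * \<nu> / 2 * (norm (\<theta> n))\<^sup>2"
definition "Fs = \<Psi>s + real N * \<nu> / 2 * (norm \<theta>star)\<^sup>2"
definition "U n = (\<Sum>j<N. (norm (\<xi> (n - 1) j + dualfl_t \<rho> (n - 1) *\<^sub>R (\<xi> n j - \<xi> (n - 1) j) - \<xi>s j))\<^sup>2)"
definition "W n = (F n - Fs) + 1 / (2 * \<nu> * (1 - \<rho>)) * U n / (dualfl_t \<rho> (n - 1))\<^sup>2"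

lemma upper: "j < N \<Longrightarrow> g j y \<le> g j x + (GG j x - \<nu> *\<^sub>R x) \<bullet> (y - x) + (L - \<nu>) / 2 * (norm (y - x))\<^sup>2"
  unfolding g_def by (rule g_upper[OF hd lip])

lemma e_lower:
  assumes n: "n \<ge> 1"
  shows "F n - Fs \<ge> real N * \<nu> / 2 * (norm (\<theta> n - \<theta>star))\<^sup>2"
proof -
  obtain m where m: "n = Suc m" using n by (cases n) auto
  have "\<Psi> n \<ge> (\<Sum>j<N. \<xi> n j \<bullet> \<theta>star - g j \<theta>star)"
    unfolding \<Psi>_def m by (intro sum_mono gfacts(2)) auto
  moreover have "\<Psi>s = (\<Sum>j<N. \<xi>s j \<bullet> \<theta>star - g j \<theta>star)" by (simp add: \<Psi>s_def \<psi>s_def)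
  ultimately have "\<Psi> n - \<Psi>s \<ge> (\<Sum>j<N. \<xi> n j) \<bullet> \<theta>star - (\<Sum>j<N. \<xi>s j) \<bullet> \<theta>star"
    by (simp add: sum_subtractf inner_sum_left)
  also have "(\<Sum>j<N. \<xi> n j) \<bullet> \<theta>star - (\<Sum>j<N. \<xi>s j) \<bullet> \<theta>star = - (real N * \<nu>) * ((\<theta> n - \<theta>star) \<bullet> \<theta>star)"
    by (simp add: xi_sum xis_sum inner_diff_left algebra_simps)
  finally have h: "\<Psi> n - \<Psi>s \<ge> - (real N * \<nu>) * ((\<theta> n - \<theta>star) \<bullet> \<theta>star)" .
  have e: "(norm (\<theta> n))\<^sup>2 = (norm \<theta>star)\<^sup>2 + 2 * (\<theta>star \<bullet> (\<theta> n - \<theta>star)) + (norm (\<theta> n - \<theta>star))\<^sup>2"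
    by (rule sq_expand)
  have "real N * \<nu> / 2 * (norm (\<theta> n))\<^sup>2 = real N * \<nu> / 2 * (norm \<theta>star)\<^sup>2 + real N * \<nu> * (\<theta>star \<bullet> (\<theta> n - \<theta>star)) + real N * \<nu> / 2 * (norm (\<theta> n - \<theta>star))\<^sup>2"
    by (simp only: e) (simp add: algebra_simps)
  then show ?thesis using h unfolding F_def Fs_def by (simp add: inner_commute algebra_simps)
qed

lemma zeta_eq:
  assumes j: "j < N"
  shows "\<nu> *\<^sub>R \<zeta> (Suc m) j = ((1 + dualfl_beta \<rho> m) *\<^sub>R \<xi> (Suc m) j - dualfl_beta \<rho> m *\<^sub>R \<xi> m j)
     + \<nu> *\<^sub>R ((1 + dualfl_beta \<rho> m) *\<^sub>R \<theta> (Suc m) - dualfl_beta \<rho> m *\<^sub>R \<theta> m)"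
proof -
  have a: "\<nu> *\<^sub>R (\<zeta> m j + \<theta> (Suc m) - \<theta>loc j (Suc m)) = \<xi> (Suc m) j + \<nu> *\<^sub>R \<theta> (Suc m)"
    by (simp add: \<xi>_def algebra_simps)
  have b: "\<nu> *\<^sub>R (if m = 0 then \<theta> 0 - \<theta>loc j 0 else \<zeta> (m - 1) j + \<theta> m - \<theta>loc j m) = \<xi> m j + \<nu> *\<^sub>R \<theta> m"
    using init[OF j] theta0 by (cases m) (auto simp: \<xi>_def algebra_simps)
  have "\<nu> *\<^sub>R \<zeta> (Suc m) j = (1 + dualfl_beta \<rho> m) *\<^sub>R (\<nu> *\<^sub>R (\<zeta> m j + \<theta> (Suc m) - \<theta>loc j (Suc m)))
      - dualfl_beta \<rho> m *\<^sub>R (\<nu> *\<^sub>R (if m = 0 then \<theta> 0 - \<theta>loc j 0 else \<zeta> (m - 1) j + \<theta> m - \<theta>loc j m))"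
    unfolding \<zeta>_def zeta_rep by (simp add: algebra_simps)
  also have "\<dots> = ((1 + dualfl_beta \<rho> m) *\<^sub>R \<xi> (Suc m) j - dualfl_beta \<rho> m *\<^sub>R \<xi> m j)
     + \<nu> *\<^sub>R ((1 + dualfl_beta \<rho> m) *\<^sub>R \<theta> (Suc m) - dualfl_beta \<rho> m *\<^sub>R \<theta> m)"
    unfolding a b by (simp add: algebra_simps)
  finally show ?thesis .
qed


lemma W_step:
  assumes \<rho>1: "\<rho> < 1" and k: "k \<ge> 1" and \<delta>: "\<delta> > 0"
  shows "W (Suc k) \<le> (1 + \<delta>) * ((1 - 1 / dualfl_t \<rho> k) * W k + real N * ((1 + 1 / \<delta>) * \<epsilon> k))"
proof -
  obtain m where km: "k = Suc m" using k by (cases k) auto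
  define t where "t = dualfl_t \<rho> k"
  define t' where "t' = dualfl_t \<rho> m"
  define \<beta> where "\<beta> = dualfl_beta \<rho> m"
  define mm where "mm = (1 + \<beta>) *\<^sub>R \<theta> k - \<beta> *\<^sub>R \<theta> m"
  define mu' where "mu' = \<rho> / (\<nu> * (1 - \<rho>))"
  define w where "w = 1 / t"
  have \<rho>1': "\<rho> \<le> 1" using \<rho>1 by simp
  have t1: "t \<ge> 1" "t' \<ge> 1" unfolding t_def t'_def using t_ge1[OF \<rho>0 \<rho>1'] by auto
  have tb: "\<rho> * t\<^sup>2 \<le> 1" unfolding t_def using t_bound[OF \<rho>0 \<rho>1'] by auto
  have rt: "\<rho> * t \<le> 1"
  proof -
    have "\<rho> * t \<le> \<rho> * t\<^sup>2" using t1 \<rho>0 by (intro mult_left_mono) (auto simp: power2_eq_square)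
    then show ?thesis using tb by simp
  qed
  have trec: "t\<^sup>2 - t = t'\<^sup>2 * (1 - \<rho> * t)" unfolding t_def t'_def km by (rule t_rec)
  have \<beta>: "\<beta> = (t' - 1) / t * ((1 - t * \<rho>) / (1 - \<rho>))"
    unfolding \<beta>_def dualfl_beta_def t_def t'_def km ..
  have mK: "mu' * (L - \<nu>) \<le> 1"
  proof -
    have "\<rho> * L \<le> \<nu>" using \<rho>L L by (simp add: field_simps)
    then have "\<rho> * (L - \<nu>) \<le> \<nu> * (1 - \<rho>)" by (simp add: algebra_simps)
    then show ?thesis using \<nu> \<rho>1 unfolding mu'_def by (simp add: field_simps)
  qed
  have mu0: "0 \<le> mu'" using \<rho>0 \<rho>1 \<nu> unfolding mu'_def by simp
  have w01: "0 \<le> w" "w \<le> 1" using t1 unfolding w_def by auto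
  have cj: "(1 - w) * \<psi> k j + w * \<psi>s j \<ge> \<psi> (Suc k) j + \<theta>loc j (Suc k) \<bullet> (((1 - w) *\<^sub>R \<xi> k j + w *\<^sub>R \<xi>s j) - \<xi> (Suc k) j) - (1 + 1 / \<delta>) * \<epsilon> k
      + mu' / (2 * (1 + \<delta>)) * (norm (((1 - w) *\<^sub>R \<xi> k j + w *\<^sub>R \<xi>s j) - \<xi> (Suc k) j))\<^sup>2
      + mu' / 2 * (w * (1 - w)) * (norm (\<xi> k j - \<xi>s j))\<^sup>2" if j: "j < N" for j
  proof (rule client[where g="g j" and K="L - \<nu>"])
    show "\<And>y. g j y \<le> g j (\<theta>loc j (Suc k)) + (GG j (\<theta>loc j (Suc k)) - \<nu> *\<^sub>R \<theta>loc j (Suc k)) \<bullet> (y - \<theta>loc j (Suc k)) + (L - \<nu>) / 2 * (norm (y - \<theta>loc j (Suc k)))\<^sup>2"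
      by (rule upper[OF j])
    show "\<And>y. \<xi> k j \<bullet> y - g j y \<le> \<psi> k j" unfolding km by (rule gfacts(2)[OF j])
    show "\<And>y. \<xi>s j \<bullet> y - g j y \<le> \<psi>s j" by (rule gs_tangent[OF j])
    show "\<psi> (Suc k) j \<le> \<epsilon> k + \<xi> (Suc k) j \<bullet> \<theta>loc j (Suc k) - g j (\<theta>loc j (Suc k))" by (rule gfacts(1)[OF j])
    show "\<And>y. \<xi> (Suc k) j \<bullet> y - g j y \<le> \<psi> (Suc k) j" by (rule gfacts(2)[OF j])
  qed (use mu0 mK w01 \<delta> in auto)
  have cl: "(1 - w) * \<Psi> k + w * \<Psi>s \<ge> \<Psi> (Suc k) + (\<Sum>j<N. \<theta>loc j (Suc k) \<bullet> (((1 - w) *\<^sub>R \<xi> k j + w *\<^sub>R \<xi>s j) - \<xi> (Suc k) j))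
      - real N * ((1 + 1 / \<delta>) * \<epsilon> k)
      + mu' / (2 * (1 + \<delta>)) * (\<Sum>j<N. (norm (((1 - w) *\<^sub>R \<xi> k j + w *\<^sub>R \<xi>s j) - \<xi> (Suc k) j))\<^sup>2)
      + mu' / 2 * (w * (1 - w)) * (\<Sum>j<N. (norm (\<xi> k j - \<xi>s j))\<^sup>2)"
    unfolding \<Psi>_def \<Psi>s_def by (rule sum_client) (rule cj)
  have xp: "\<xi> (Suc k) j = ((1 + \<beta>) *\<^sub>R \<xi> k j - \<beta> *\<^sub>R \<xi> m j) + \<nu> *\<^sub>R mm - \<nu> *\<^sub>R \<theta>loc j (Suc k)" if j: "j < N" for j
  proof -
    have "\<xi> (Suc k) j = \<nu> *\<^sub>R \<zeta> k j - \<nu> *\<^sub>R \<theta>loc j (Suc k)" by (simp add: \<xi>_def algebra_simps)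
    also have "\<nu> *\<^sub>R \<zeta> k j = ((1 + \<beta>) *\<^sub>R \<xi> k j - \<beta> *\<^sub>R \<xi> m j) + \<nu> *\<^sub>R mm"
      unfolding km \<beta>_def mm_def by (rule zeta_eq[OF j])
    finally show ?thesis .
  qed
  have st: "(\<Sum>j<N. \<theta>loc j (Suc k)) = real N *\<^sub>R \<theta> (Suc k)" using N by (simp add: \<theta>_def)
  have ep: "\<Psi> (Suc k) + real N * \<nu> / 2 * (norm (\<theta> (Suc k)))\<^sup>2 - (\<Psi>s + real N * \<nu> / 2 * (norm \<theta>star)\<^sup>2) \<ge> 0"
  proof -
    have "0 \<le> real N * \<nu> / 2 * (norm (\<theta> (Suc k) - \<theta>star))\<^sup>2" using \<nu> by simp
    then show ?thesis using e_lower[of "Suc k"] unfolding F_def Fs_def by linarith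
  qed
  note main = step[where \<xi>k="\<xi> k" and \<xi>km="\<xi> m" and \<xi>p="\<xi> (Suc k)" and \<xi>s=\<xi>s and \<theta>l="\<lambda>j. \<theta>loc j (Suc k)"
     and \<Theta>k="\<theta> k" and \<Theta>s=\<theta>star and \<Theta>p="\<theta> (Suc k)" and mm=mm and \<Psi>k="\<Psi> k" and \<Psi>s=\<Psi>s and \<Psi>p="\<Psi> (Suc k)"
     and \<epsilon>="\<epsilon> k" and m=mu', OF N \<nu> \<rho>0 \<rho>1 t1 rt trec \<beta> \<delta> mu'_def xp st xi_sum xis_sum xi_sum cl[unfolded w_def] ep]
  have e1: "Suc k - 1 = k" "k - 1 = m" using km by auto
  show ?thesis using main unfolding W_def F_def Fs_def U_def t_def t'_def e1 .
qed


lemma t_le: assumes "\<rho> \<le> 1" shows "dualfl_t \<rho> n \<le> real n + 1"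
proof (induction n)
  case (Suc n) then show ?case using t_step[OF \<rho>0 assms, of n] by simp
qed simp

definition "hh = (2 + \<gamma>) / (2 + 2 * \<gamma>)"
definition "qq = 2 / (2 + \<gamma>)"

lemma hh: "0 < hh" "hh < 1" using \<gamma> by (auto simp: hh_def field_simps)
lemma qq: "0 < qq" "qq < 1" using \<gamma> by (auto simp: qq_def field_simps)

lemma err_bound:
  assumes \<rho>1: "\<rho> \<le> 1"
  shows "(1 + hh ^ Suc k) * (real N * ((1 + 1 / hh ^ Suc k) * \<epsilon> (Suc k))) \<le> 4 * ((1 - sqrt \<rho>) * qq) ^ Suc k"
proof -
  define d where "d = hh ^ Suc k"
  define r where "r = 1 - sqrt \<rho>"
  have r0: "0 \<le> r" using \<rho>1 \<rho>0 by (simp add: r_def)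
  have d: "0 < d" "d \<le> 1" unfolding d_def using hh by (auto intro!: power_le_one simp del: power_Suc)
  have Ne: "real N * \<epsilon> (Suc k) = (r / (1 + \<gamma>)) ^ Suc k" using N by (simp add: \<epsilon>_def r_def)
  have "(1 + d) * (1 + 1 / d) \<le> 4 / d"
  proof -
    have "(1 + d) * (1 + 1 / d) = (1 + d)\<^sup>2 / d" using d by (simp add: field_simps power2_eq_square)
    also have "\<dots> \<le> 4 / d"
    proof (rule divide_right_mono)
      have "(1 + d) * (1 + d) \<le> 2 * 2" using d by (intro mult_mono) auto
      then show "(1 + d)\<^sup>2 \<le> 4" by (simp add: power2_eq_square)
    qed (use d in auto)
    finally show ?thesis .
  qed
  moreover have "0 \<le> real N * \<epsilon> (Suc k)" unfolding Ne using r0 \<gamma> by simp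
  ultimately have "((1 + d) * (1 + 1 / d)) * (real N * \<epsilon> (Suc k)) \<le> 4 / d * (real N * \<epsilon> (Suc k))"
    by (rule mult_right_mono)
  then have "(1 + d) * (real N * ((1 + 1 / d) * \<epsilon> (Suc k))) \<le> 4 / d * (r / (1 + \<gamma>)) ^ Suc k"
    unfolding Ne[symmetric] by (simp add: mult_ac)
  also have "4 / d * (r / (1 + \<gamma>)) ^ Suc k = 4 * (r / ((1 + \<gamma>) * hh)) ^ Suc k"
    using hh by (simp add: d_def power_divide power_mult_distrib)
  also have "r / ((1 + \<gamma>) * hh) = r * qq"
  proof -
    have e: "(1 + \<gamma>) * hh = (2 + \<gamma>) / 2" using \<gamma> by (simp add: hh_def field_simps)
    show ?thesis unfolding e qq_def using \<gamma> by (simp add: field_simps)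
  qed
  finally show ?thesis unfolding d_def r_def .
qed

lemma W_nonneg: assumes "n \<ge> 1" "\<rho> < 1" shows "W n \<ge> F n - Fs"
proof -
  have "0 \<le> 1 / (2 * \<nu> * (1 - \<rho>)) * U n / (dualfl_t \<rho> (n - 1))\<^sup>2"
    using \<nu> assms by (auto simp: U_def intro!: sum_nonneg divide_nonneg_nonneg mult_nonneg_nonneg)
  then show ?thesis unfolding W_def by simp
qed

lemma W_rec:
  assumes \<rho>1: "\<rho> < 1"
  shows "W (Suc (Suc k)) \<le> (1 + hh ^ Suc k) * (1 - 1 / dualfl_t \<rho> (Suc k)) * W (Suc k) + 4 * ((1 - sqrt \<rho>) * qq) ^ Suc k"
proof -
  have "W (Suc (Suc k)) \<le> (1 + hh ^ Suc k) * ((1 - 1 / dualfl_t \<rho> (Suc k)) * W (Suc k) + real N * ((1 + 1 / hh ^ Suc k) * \<epsilon> (Suc k)))"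
    using hh by (intro W_step \<rho>1) auto
  also have "\<dots> = (1 + hh ^ Suc k) * (1 - 1 / dualfl_t \<rho> (Suc k)) * W (Suc k) + (1 + hh ^ Suc k) * (real N * ((1 + 1 / hh ^ Suc k) * \<epsilon> (Suc k)))"
    by (simp add: algebra_simps)
  also have "\<dots> \<le> (1 + hh ^ Suc k) * (1 - 1 / dualfl_t \<rho> (Suc k)) * W (Suc k) + 4 * ((1 - sqrt \<rho>) * qq) ^ Suc k"
    using err_bound \<rho>1 by simp
  finally show ?thesis .
qed


lemma sum_hh: "(\<Sum>i<k. hh ^ Suc i) \<le> 1 / (1 - hh)"
proof -
  have "(\<Sum>i<k. hh ^ Suc i) \<le> (\<Sum>i<k. hh ^ i)"
    using hh by (intro sum_mono) (auto simp: mult_left_le_one_le)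
  also have "\<dots> \<le> 1 / (1 - hh)" using hh by (intro sum_q) auto
  finally show ?thesis .
qed

lemma rate_geo:
  assumes \<rho>1: "\<rho> < 1"
  shows "\<exists>C. \<forall>n\<ge>1. W n \<le> C * (1 - sqrt \<rho>) ^ n"
proof -
  define r where "r = 1 - sqrt \<rho>"
  have r: "0 < r" "r \<le> 1" using \<rho>1 \<rho>0 by (auto simp: r_def)
  have \<rho>1': "\<rho> \<le> 1" using \<rho>1 by simp
  define C0 where "C0 = \<bar>W 1\<bar> / r"
  have main: "W (Suc k) \<le> (C0 + 4 / (r * (1 - qq))) * exp (1 / (1 - hh)) * r ^ Suc k" for k
  proof (rule rec_bound[where W="\<lambda>k. W (Suc k)" and \<delta>="\<lambda>k. hh ^ Suc k" and a="\<lambda>k. 1 - 1 / dualfl_t \<rho> (Suc k)"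
        and e="\<lambda>k. 4 * ((1 - sqrt \<rho>) * qq) ^ Suc k" and T="\<lambda>k. r ^ Suc k" and \<eta>="\<lambda>k. 4 * qq ^ Suc k / r"])
    show "W (Suc (Suc k)) \<le> (1 + hh ^ Suc k) * (1 - 1 / dualfl_t \<rho> (Suc k)) * W (Suc k) + 4 * ((1 - sqrt \<rho>) * qq) ^ Suc k" for k
      by (rule W_rec[OF \<rho>1])
    show "0 \<le> 1 - 1 / dualfl_t \<rho> (Suc k)" for k using t_ge1[OF \<rho>0 \<rho>1', of "Suc k"] by simp
    show "0 \<le> hh ^ Suc k" for k using hh by simp
    show "(1 - 1 / dualfl_t \<rho> (Suc k)) * r ^ Suc k \<le> r ^ Suc (Suc k)" for k
    proof -
      define t where "t = dualfl_t \<rho> (Suc k)"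
      have t1: "t \<ge> 1" unfolding t_def by (rule t_ge1[OF \<rho>0 \<rho>1'])
      have tb: "\<rho> * t\<^sup>2 \<le> 1" unfolding t_def by (rule t_bound[OF \<rho>0 \<rho>1'])
      have "(sqrt \<rho> * t)\<^sup>2 \<le> 1" using tb \<rho>0 by (simp add: power_mult_distrib)
      then have "sqrt \<rho> * t \<le> 1" using power2_le_imp_le[of "sqrt \<rho> * t" 1] by simp
      then have "sqrt \<rho> \<le> 1 / t" using t1 by (simp add: field_simps)
      then have "1 - 1 / t \<le> r" by (simp add: r_def)
      then have "(1 - 1 / t) * r ^ Suc k \<le> r * r ^ Suc k" using r by (intro mult_right_mono) auto
      then show ?thesis unfolding t_def by simp
    qed
    show "4 * ((1 - sqrt \<rho>) * qq) ^ Suc k \<le> 4 * qq ^ Suc k / r * r ^ Suc (Suc k)" for k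
      using r by (simp add: r_def[symmetric] power_mult_distrib field_simps)
    show "0 \<le> 4 * qq ^ Suc k / r" for k using qq r by simp
    show "0 < r ^ k" for k using r by simp
    show "(\<Sum>i<k. hh ^ Suc i) \<le> 1 / (1 - hh)" for k by (rule sum_hh)
    show "(\<Sum>i<k. 4 * qq ^ Suc i / r) \<le> 4 / (r * (1 - qq))" for k
    proof -
      have "(\<Sum>i<k. 4 * qq ^ Suc i / r) \<le> (\<Sum>i<k. (4 / r) * qq ^ i)"
        using qq r by (intro sum_mono) (auto simp: mult_left_le_one_le field_simps)
      also have "\<dots> = (4 / r) * (\<Sum>i<k. qq ^ i)" by (simp add: sum_distrib_left)
      also have "\<dots> \<le> (4 / r) * (1 / (1 - qq))" using qq r by (intro mult_left_mono sum_q) auto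
      finally show ?thesis by simp
    qed
    show "W (Suc 0) \<le> C0 * r ^ Suc 0" using r by (simp add: C0_def)
    show "0 \<le> C0" using r by (simp add: C0_def)
  qed
  show ?thesis
  proof (intro exI allI impI)
    fix n :: nat assume "1 \<le> n"
    then obtain k where "n = Suc k" by (cases n) auto
    then show "W n \<le> (C0 + 4 / (r * (1 - qq))) * exp (1 / (1 - hh)) * (1 - sqrt \<rho>) ^ n"
      using main[of k] by (simp add: r_def)
  qed
qed

lemma rate_harm:
  assumes \<rho>1: "\<rho> < 1"
  shows "\<exists>C. \<forall>n\<ge>1. W n \<le> C / real n"
proof -
  have \<rho>1': "\<rho> \<le> 1" using \<rho>1 by simp
  define C0 where "C0 = \<bar>W 1\<bar>"
  have main: "W (Suc k) \<le> (C0 + 8 / (1 - qq)\<^sup>2) * exp (1 / (1 - hh)) * (1 / (real k + 1))" for k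
  proof (rule rec_bound[where W="\<lambda>k. W (Suc k)" and \<delta>="\<lambda>k. hh ^ Suc k" and a="\<lambda>k. 1 - 1 / dualfl_t \<rho> (Suc k)"
        and e="\<lambda>k. 4 * ((1 - sqrt \<rho>) * qq) ^ Suc k" and T="\<lambda>k. 1 / (real k + 1)" and \<eta>="\<lambda>k. 8 * ((real k + 1) * qq ^ k)"])
    show "W (Suc (Suc k)) \<le> (1 + hh ^ Suc k) * (1 - 1 / dualfl_t \<rho> (Suc k)) * W (Suc k) + 4 * ((1 - sqrt \<rho>) * qq) ^ Suc k" for k
      by (rule W_rec[OF \<rho>1])
    show "0 \<le> 1 - 1 / dualfl_t \<rho> (Suc k)" for k using t_ge1[OF \<rho>0 \<rho>1', of "Suc k"] by simp
    show "0 \<le> hh ^ Suc k" for k using hh by simp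
    show "(1 - 1 / dualfl_t \<rho> (Suc k)) * (1 / (real k + 1)) \<le> 1 / (real (Suc k) + 1)" for k
    proof -
      define t where "t = dualfl_t \<rho> (Suc k)"
      have t1: "t \<ge> 1" unfolding t_def by (rule t_ge1[OF \<rho>0 \<rho>1'])
      have tk: "t \<le> real k + 2" using t_le[OF \<rho>1', of "Suc k"] unfolding t_def by simp
      have "1 / (real k + 2) \<le> 1 / t" using t1 tk by (intro divide_left_mono) auto
      then have "1 - 1 / t \<le> (real k + 1) / (real k + 2)" by (simp add: field_simps)
      then have "(1 - 1 / t) * (1 / (real k + 1)) \<le> (real k + 1) / (real k + 2) * (1 / (real k + 1))"
        by (intro mult_right_mono) auto
      moreover have "real (Suc k) + 1 = real k + 2" by simp
      ultimately show ?thesis unfolding t_def by (simp only:) simp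
    qed
    show "4 * ((1 - sqrt \<rho>) * qq) ^ Suc k \<le> 8 * ((real k + 1) * qq ^ k) * (1 / (real (Suc k) + 1))" for k
    proof -
      have r: "0 \<le> 1 - sqrt \<rho>" "1 - sqrt \<rho> \<le> 1" using \<rho>0 \<rho>1' by auto
      have "((1 - sqrt \<rho>) * qq) ^ Suc k \<le> qq ^ Suc k"
        using r qq by (intro power_mono) (auto simp: mult_left_le_one_le)
      also have "\<dots> \<le> qq ^ k" using qq by (simp add: mult_left_le_one_le)
      finally have a: "4 * ((1 - sqrt \<rho>) * qq) ^ Suc k \<le> 4 * qq ^ k" by simp
      have "4 * qq ^ k * (real k + 2) \<le> 8 * ((real k + 1) * qq ^ k)" using qq by (simp add: algebra_simps)
      then have "4 * qq ^ k \<le> 8 * ((real k + 1) * qq ^ k) * (1 / (real k + 2))" by (simp add: field_simps)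
      moreover have "real (Suc k) + 1 = real k + 2" by simp
      ultimately show ?thesis using a by (simp only:)
    qed
    show "0 \<le> 8 * ((real k + 1) * qq ^ k)" for k using qq by simp
    show "0 < 1 / (real k + 1)" for k by simp
    show "(\<Sum>i<k. hh ^ Suc i) \<le> 1 / (1 - hh)" for k by (rule sum_hh)
    show "(\<Sum>i<k. 8 * ((real i + 1) * qq ^ i)) \<le> 8 / (1 - qq)\<^sup>2" for k
      using sum_iq[of qq k] qq by (simp add: sum_distrib_left[symmetric])
    show "W (Suc 0) \<le> C0 * (1 / (real 0 + 1))" by (simp add: C0_def)
    show "0 \<le> C0" by (simp add: C0_def)
  qed
  show ?thesis
  proof (intro exI allI impI)
    fix n :: nat assume "1 \<le> n"
    then obtain k where "n = Suc k" by (cases n) auto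
    then show "W n \<le> ((C0 + 8 / (1 - qq)\<^sup>2) * exp (1 / (1 - hh))) / real n"
      using main[of k] by (simp add: add.commute)
  qed
qed


lemma dist_bound:
  assumes "\<rho> < 1" "n \<ge> 1"
  shows "(norm (\<theta> n - \<theta>star))\<^sup>2 \<le> 2 / (real N * \<nu>) * W n"
proof -
  have "real N * \<nu> / 2 * (norm (\<theta> n - \<theta>star))\<^sup>2 \<le> W n"
    using e_lower[OF assms(2)] W_nonneg[OF assms(2,1)] by linarith
  then show ?thesis using N \<nu> by (simp add: field_simps)
qed

lemma rho1_exact:
  assumes \<rho>1: "\<rho> = 1" and n: "n \<ge> 1"
  shows "\<theta> n = \<theta>star"
proof -
  obtain k where nk: "n = Suc k" using n by (cases n) auto
  have Lnu: "L \<le> \<nu>" using \<rho>L \<rho>1 L by (simp add: field_simps)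
  define D where "D j x = GG j x - \<nu> *\<^sub>R x" for j x
  have lin: "g j y = g j x + D j x \<bullet> (y - x)" if j: "j < N" for j x y
  proof -
    have "g j y \<ge> g j x + D j x \<bullet> (y - x)"
      using g_tangent[OF sc[OF j] \<nu>\<mu> hd[OF j], of x y] by (simp add: g_def D_def)
    moreover have "g j y \<le> g j x + D j x \<bullet> (y - x) + (L - \<nu>) / 2 * (norm (y - x))\<^sup>2"
      using upper[OF j] by (simp add: D_def)
    moreover have "(L - \<nu>) / 2 * (norm (y - x))\<^sup>2 \<le> 0" using Lnu by (simp add: mult_nonpos_nonneg)
    ultimately show ?thesis by linarith
  qed
  have Dc: "D j x = D j 0" if j: "j < N" for j x
  proof -
    define v where "v = D j x - D j 0"
    have "g j (x + v) = g j x + D j x \<bullet> v" using lin[OF j, where x=x and y="x + v"] by simp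
    moreover have "g j (x + v) = g j 0 + D j 0 \<bullet> (x + v)" using lin[OF j, where x=0 and y="x + v"] by simp
    moreover have "g j x = g j 0 + D j 0 \<bullet> x" using lin[OF j, where x=0 and y=x] by simp
    ultimately have "D j x \<bullet> v = D j 0 \<bullet> v" by (simp add: inner_add_right)
    then have "v \<bullet> v = 0" by (simp add: v_def inner_diff_left)
    then show ?thesis by (simp add: v_def)
  qed
  have xe: "\<xi> (Suc k) j = D j 0" if j: "j < N" for j
  proof -
    define th where "th = \<theta>loc j (Suc k)"
    define d where "d = D j th"
    have up: "\<And>y. g j y \<le> g j th + d \<bullet> (y - th) + (L - \<nu>) / 2 * (norm (y - th))\<^sup>2"
      unfolding d_def D_def by (rule upper[OF j])
    have bnd: "c * (norm (\<xi> (Suc k) j - d))\<^sup>2 \<le> \<epsilon> k" if c: "c \<ge> 0" for c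
    proof -
      have "\<psi> (Suc k) j \<ge> \<xi> (Suc k) j \<bullet> th - g j th + (2 * c) / 2 * (norm (\<xi> (Suc k) j - d))\<^sup>2"
      proof (rule conj_sc[OF up])
        show "0 \<le> 2 * c" using c by simp
        have "2 * c * (L - \<nu>) \<le> 0" using c Lnu by (intro mult_nonneg_nonpos) auto
        then show "2 * c * (L - \<nu>) \<le> 1" by simp
        show "\<And>y. \<xi> (Suc k) j \<bullet> y - g j y \<le> \<psi> (Suc k) j" by (rule gfacts(2)[OF j])
      qed
      then show ?thesis using gfacts(1)[OF j, of k] unfolding th_def by simp
    qed
    have "(norm (\<xi> (Suc k) j - d))\<^sup>2 = 0"
    proof (rule ccontr)
      assume ne: "(norm (\<xi> (Suc k) j - d))\<^sup>2 \<noteq> 0"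
      then have pos: "(norm (\<xi> (Suc k) j - d))\<^sup>2 > 0" by simp
      have e0: "\<epsilon> k \<ge> 0"
        using bnd[of 0] by simp
      have "((\<epsilon> k + 1) / (norm (\<xi> (Suc k) j - d))\<^sup>2) * (norm (\<xi> (Suc k) j - d))\<^sup>2 \<le> \<epsilon> k"
        using e0 pos by (intro bnd) simp
      then show False using pos by simp
    qed
    then show ?thesis using Dc[OF j, of th] by (simp add: d_def)
  qed
  have "- (real N * \<nu>) *\<^sub>R \<theta> (Suc k) = (\<Sum>j<N. D j 0)" unfolding xi_sum[symmetric] by (rule sum.cong) (auto simp: xe)
  moreover have "- (real N * \<nu>) *\<^sub>R \<theta>star = (\<Sum>j<N. D j 0)"
  proof -
    have "\<xi>s j = D j 0" if "j < N" for j using Dc[OF that, of \<theta>star] by (simp add: \<xi>s_def D_def)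
    then show ?thesis unfolding xis_sum[symmetric] by (intro sum.cong) auto
  qed
  ultimately have "- ((real N * \<nu>) *\<^sub>R \<theta> (Suc k)) = - ((real N * \<nu>) *\<^sub>R \<theta>star)" by simp
  then have "(real N * \<nu>) *\<^sub>R \<theta> (Suc k) = (real N * \<nu>) *\<^sub>R \<theta>star" by (metis neg_equal_iff_equal)
  then show ?thesis using N \<nu> nk by simp
qed


lemma E_bound: "E x - E \<theta>star \<le> L / 2 * (norm (x - \<theta>star))\<^sup>2"
proof -
  have "(\<Sum>j<N. f j x) \<le> (\<Sum>j<N. f j \<theta>star + GG j \<theta>star \<bullet> (x - \<theta>star) + L / 2 * (norm (x - \<theta>star))\<^sup>2)"
    by (intro sum_mono descent[OF hd lip]) auto
  also have "\<dots> = (\<Sum>j<N. f j \<theta>star) + real N * (L / 2 * (norm (x - \<theta>star))\<^sup>2)"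
    by (simp add: sum.distrib inner_sum_left[symmetric] grad_sum)
  finally have "(\<Sum>j<N. f j x) - (\<Sum>j<N. f j \<theta>star) \<le> real N * (L / 2 * (norm (x - \<theta>star))\<^sup>2)" by simp
  then have "((\<Sum>j<N. f j x) - (\<Sum>j<N. f j \<theta>star)) / real N \<le> L / 2 * (norm (x - \<theta>star))\<^sup>2"
    using N by (simp add: divide_le_eq mult.commute)
  then show ?thesis unfolding E_def by (simp add: diff_divide_distrib)
qed

lemma mu_le_L: "\<mu> \<le> L"
proof -
  obtain b :: 'a where b: "b \<in> Basis" using nonempty_Basis by blast
  then have b0: "b \<noteq> 0" by auto
  have N0: "0 < N" by (rule N)
  have "f 0 b - \<mu> / 2 * (norm b)\<^sup>2 \<ge> (f 0 0 - \<mu> / 2 * (norm (0::'a))\<^sup>2) + (GG 0 0 - \<mu> *\<^sub>R 0) \<bullet> (b - 0)"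
    by (rule g_tangent[OF sc[OF N0] order.refl hd[OF N0]])
  moreover have "f 0 b - \<mu> / 2 * (norm b)\<^sup>2 \<le> (f 0 0 - \<mu> / 2 * (norm (0::'a))\<^sup>2) + (GG 0 0 - \<mu> *\<^sub>R 0) \<bullet> (b - 0) + (L - \<mu>) / 2 * (norm (b - 0))\<^sup>2"
    by (rule g_upper[OF hd[OF N0] lip[OF N0]])
  ultimately have "0 \<le> (L - \<mu>) / 2 * (norm b)\<^sup>2" by simp
  moreover have "(norm b)\<^sup>2 > 0" using b0 by simp
  ultimately show ?thesis by (simp add: zero_le_mult_iff)
qed

lemma rho_le1: "\<rho> \<le> 1"
proof -
  have "\<nu> / L \<le> \<mu> / L" using \<nu>\<mu> L by (simp add: divide_right_mono)
  also have "\<dots> \<le> 1" using mu_le_L L by simp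
  finally show ?thesis using \<rho>L by simp
qed

lemma rate_all: "\<exists>C2>0. \<forall>n. (norm (\<theta> n - \<theta>star))\<^sup>2 \<le> C2 * (1 - sqrt \<rho>) ^ n"
proof (cases "\<rho> < 1")
  case True
  obtain C where C: "\<forall>n\<ge>1. W n \<le> C * (1 - sqrt \<rho>) ^ n" using rate_geo[OF True] by blast
  define C2 where "C2 = max 1 (max ((norm \<theta>star)\<^sup>2) (2 / (real N * \<nu>) * C))"
  have r0: "0 \<le> (1 - sqrt \<rho>) ^ n" for n using True \<rho>0 by simp
  show ?thesis
  proof (intro exI conjI allI)
    show "C2 > 0" by (simp add: C2_def)
    fix n
    show "(norm (\<theta> n - \<theta>star))\<^sup>2 \<le> C2 * (1 - sqrt \<rho>) ^ n"
    proof (cases "n = 0")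
      case True then show ?thesis by (simp add: theta0 C2_def)
    next
      case False
      then have n1: "n \<ge> 1" by simp
      have "(norm (\<theta> n - \<theta>star))\<^sup>2 \<le> 2 / (real N * \<nu>) * W n" by (rule dist_bound[OF \<open>\<rho> < 1\<close> n1])
      also have "\<dots> \<le> 2 / (real N * \<nu>) * (C * (1 - sqrt \<rho>) ^ n)"
        using C n1 N \<nu> by (intro mult_left_mono) auto
      also have "\<dots> = (2 / (real N * \<nu>) * C) * (1 - sqrt \<rho>) ^ n" by simp
      also have "\<dots> \<le> C2 * (1 - sqrt \<rho>) ^ n" using r0 by (intro mult_right_mono) (auto simp: C2_def)
      finally show ?thesis .
    qed
  qed
next
  case False
  have \<rho>1: "\<rho> = 1" using False rho_le1 by simp
  define C2 where "C2 = max 1 ((norm \<theta>star)\<^sup>2)"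
  show ?thesis
  proof (intro exI conjI allI)
    show "C2 > 0" by (simp add: C2_def)
    fix n
    show "(norm (\<theta> n - \<theta>star))\<^sup>2 \<le> C2 * (1 - sqrt \<rho>) ^ n"
    proof (cases "n = 0")
      case True then show ?thesis by (simp add: theta0 C2_def)
    next
      case False then show ?thesis using rho1_exact[OF \<rho>1, of n] by (simp add: \<rho>1 zero_power)
    qed
  qed
qed

lemma conv: "\<theta> \<longlonglongrightarrow> \<theta>star"
proof (cases "\<rho> < 1")
  case True
  obtain C where C: "\<forall>n\<ge>1. W n \<le> C / real n" using rate_harm[OF True] by blast
  define B where "B = 2 / (real N * \<nu>) * C"
  have "eventually (\<lambda>n. norm (\<theta> n - \<theta>star) \<le> sqrt (B / real n)) sequentially"
    unfolding eventually_sequentially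
  proof (intro exI allI impI)
    fix n :: nat assume n1: "n \<ge> 1"
    have "(norm (\<theta> n - \<theta>star))\<^sup>2 \<le> 2 / (real N * \<nu>) * W n" by (rule dist_bound[OF True n1])
    also have "\<dots> \<le> 2 / (real N * \<nu>) * (C / real n)" using C n1 N \<nu> by (intro mult_left_mono) auto
    also have "\<dots> = B / real n" by (simp add: B_def)
    finally show "norm (\<theta> n - \<theta>star) \<le> sqrt (B / real n)" by (rule real_le_rsqrt)
  qed
  moreover have "(\<lambda>n. sqrt (B / real n)) \<longlonglongrightarrow> 0"
    using tendsto_real_sqrt[OF lim_const_over_n[of B]] by simp
  ultimately have "(\<lambda>n. \<theta> n - \<theta>star) \<longlonglongrightarrow> 0" by (rule Lim_null_comparison)
  then show ?thesis by (rule LIM_zero_cancel)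
next
  case False
  have \<rho>1: "\<rho> = 1" using False rho_le1 by simp
  have "eventually (\<lambda>n. \<theta> n = \<theta>star) sequentially"
    unfolding eventually_sequentially using rho1_exact[OF \<rho>1] by blast
  then show ?thesis by (rule tendsto_eventually)
qed

end

theorem theorem3p3:
  fixes N :: nat and f :: "nat \<Rightarrow> 'a::euclidean_space \<Rightarrow> real"
    and \<mu> L \<rho> \<nu> \<gamma> :: real and \<theta>star :: 'a
    and \<theta>loc :: "nat \<Rightarrow> nat \<Rightarrow> 'a"
  defines "E \<equiv> \<lambda>x. (\<Sum>j<N. f j x) / real N"
      and "\<theta> \<equiv> \<lambda>n. (1 / real N) *\<^sub>R (\<Sum>j<N. \<theta>loc j n)"
  assumes "N > 0" and "\<mu> > 0" and "L > 0"
    and "\<And>j. j < N \<Longrightarrow> convex_on UNIV (f j)"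
    and "\<And>j. j < N \<Longrightarrow> strongly_convex \<mu> (f j)"
    and "\<And>j. j < N \<Longrightarrow> L_smooth L (f j)"
    and "\<And>x. E \<theta>star \<le> E x"
    and "0 \<le> \<rho>" and "\<rho> \<le> \<nu> / L" and "0 < \<nu>" and "\<nu> \<le> \<mu>"
    and "\<gamma> > 0"
    and "\<And>j. j < N \<Longrightarrow> \<theta>loc j 0 = 0"
    and "\<And>j n. j < N \<Longrightarrow>
           dualfl_gap \<nu> (f j) (dualfl_zeta \<rho> \<theta> (\<theta>loc j) n) (\<theta>loc j (Suc n))
             \<le> ereal (1 / real N * ((1 - sqrt \<rho>) / (1 + \<gamma>)) ^ n)"
  shows "\<theta> \<longlonglongrightarrow> \<theta>star
    \<and> (\<exists>C1 C2. C1 > 0 \<and> C2 > 0 \<and>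
         (\<forall>n. E (\<theta> n) - E \<theta>star \<le> C1 * (norm (\<theta> n - \<theta>star))\<^sup>2
              \<and> (norm (\<theta> n - \<theta>star))\<^sup>2 \<le> C2 * (1 - sqrt \<rho>) ^ n))
    \<and> (\<rho> = 1 / (L / \<mu>) \<and> \<nu> = \<mu> \<longrightarrow>
         (\<exists>C1 C2. C1 > 0 \<and> C2 > 0 \<and>
           (\<forall>n. E (\<theta> n) - E \<theta>star \<le> C1 * (norm (\<theta> n - \<theta>star))\<^sup>2
                \<and> (norm (\<theta> n - \<theta>star))\<^sup>2 \<le> C2 * (1 - 1 / sqrt (L / \<mu>)) ^ n)))"
proof -
  have "\<forall>j. \<exists>G. j < N \<longrightarrow> ((\<forall>x. (f j has_derivative (\<lambda>v. G x \<bullet> v)) (at x)) \<and> (\<forall>x y. norm (G x - G y) \<le> L * norm (x - y)))"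
  proof
    fix j
    show "\<exists>G. j < N \<longrightarrow> ((\<forall>x. (f j has_derivative (\<lambda>v. G x \<bullet> v)) (at x)) \<and> (\<forall>x y. norm (G x - G y) \<le> L * norm (x - y)))"
    proof (cases "j < N")
      case True
      then obtain G where "\<forall>x. (f j has_derivative (\<lambda>v. G x \<bullet> v)) (at x)" "\<forall>x y. norm (G x - G y) \<le> L * norm (x - y)"
        using assms(8)[OF True] unfolding L_smooth_def by blast
      then show ?thesis by blast
    qed simp
  qed
  then have "\<exists>GG. \<forall>j. j < N \<longrightarrow> ((\<forall>x. (f j has_derivative (\<lambda>v. GG j x \<bullet> v)) (at x)) \<and> (\<forall>x y. norm (GG j x - GG j y) \<le> L * norm (x - y)))"
    by (rule choice)
  then obtain GG where GG0: "\<forall>j. j < N \<longrightarrow> ((\<forall>x. (f j has_derivative (\<lambda>v. GG j x \<bullet> v)) (at x)) \<and> (\<forall>x y. norm (GG j x - GG j y) \<le> L * norm (x - y)))"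
    by (elim exE)
  then have GG: "\<And>j. j < N \<Longrightarrow> (\<forall>x. (f j has_derivative (\<lambda>v. GG j x \<bullet> v)) (at x)) \<and> (\<forall>x y. norm (GG j x - GG j y) \<le> L * norm (x - y))"
    by blast
  interpret D: dfl N f \<mu> L \<rho> \<nu> \<gamma> \<theta>star \<theta>loc E \<theta> GG
  proof (unfold_locales)
    show "E = (\<lambda>x. (\<Sum>j<N. f j x) / real N)" by (simp add: E_def)
    show "\<theta> = (\<lambda>n. (1 / real N) *\<^sub>R (\<Sum>j<N. \<theta>loc j n))" by (simp add: \<theta>_def)
    show "\<And>j x. j < N \<Longrightarrow> (f j has_derivative (\<lambda>v. GG j x \<bullet> v)) (at x)" using GG by blast
    show "\<And>j x y. j < N \<Longrightarrow> norm (GG j x - GG j y) \<le> L * norm (x - y)" using GG by blast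
    show "\<And>j n. j < N \<Longrightarrow> dualfl_gap \<nu> (f j) (dualfl_zeta \<rho> \<theta> (\<theta>loc j) n) (\<theta>loc j (Suc n)) \<le> ereal (1 / real N * ((1 - sqrt \<rho>) / (1 + \<gamma>)) ^ n)"
      by (rule assms(16))
  qed (fact assms)+
  obtain C2 where C2: "C2 > 0" "\<And>n. (norm (\<theta> n - \<theta>star))\<^sup>2 \<le> C2 * (1 - sqrt \<rho>) ^ n"
    using D.rate_all by blast
  have part2: "\<exists>C1 C2. C1 > 0 \<and> C2 > 0 \<and>
         (\<forall>n. E (\<theta> n) - E \<theta>star \<le> C1 * (norm (\<theta> n - \<theta>star))\<^sup>2
              \<and> (norm (\<theta> n - \<theta>star))\<^sup>2 \<le> C2 * (1 - sqrt \<rho>) ^ n)"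
    using C2 D.E_bound assms(5) by (intro exI[of _ "L / 2"] exI[of _ C2]) auto
  have part3: "\<rho> = 1 / (L / \<mu>) \<and> \<nu> = \<mu> \<longrightarrow>
         (\<exists>C1 C2. C1 > 0 \<and> C2 > 0 \<and>
           (\<forall>n. E (\<theta> n) - E \<theta>star \<le> C1 * (norm (\<theta> n - \<theta>star))\<^sup>2
                \<and> (norm (\<theta> n - \<theta>star))\<^sup>2 \<le> C2 * (1 - 1 / sqrt (L / \<mu>)) ^ n))"
  proof
    assume h: "\<rho> = 1 / (L / \<mu>) \<and> \<nu> = \<mu>"
    have "sqrt \<rho> = 1 / sqrt (L / \<mu>)" using h by (simp add: real_sqrt_divide)
    then show "\<exists>C1 C2. C1 > 0 \<and> C2 > 0 \<and>
           (\<forall>n. E (\<theta> n) - E \<theta>star \<le> C1 * (norm (\<theta> n - \<theta>star))\<^sup>2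
                \<and> (norm (\<theta> n - \<theta>star))\<^sup>2 \<le> C2 * (1 - 1 / sqrt (L / \<mu>)) ^ n)"
      using part2 by simp
  qed
  show ?thesis using D.conv part2 part3 by blast
qed

end
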